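(* Let $\nabla$ be a compatible connection on $\mathfrak{H}_n^\infty$ and let $h_1,\dots,h_N\in\mathbb{M}_n(\mathcal{A}_\theta^\infty)$ be the skew-adjoint elements with $\nabla_k=D_k+\pi(h_k)$. Then the operator $H:=-\sum_k(D_k+\pi(h_k))^2$ with domain $\mathcal{D}(H):=\mathcal{D}(\Delta)$ is self-adjoint.
   Context: $\theta$ is a real antisymmetric $N\times N$ matrix; $\mathcal{A}_\theta$ is the universal $C^*$-algebra generated by unitaries $u_1,\dots,u_N$ with $u_ku_l=\exp(2\pi i\theta_{kl})u_lu_k$; $\mathcal{A}_\theta^\infty$ is its smooth part for the torus action $\sigma_z(u^\alpha)=z^\alpha u^\alpha$, with derivations $\delta_ku_l=i\delta_{kl}u_l$ acting entrywise on matrices as $\delta_k^{(n)}$. $\mathfrak{H}_n=L^2(\mathcal{A}_\theta\otimes\mathbb{M}_n(\mathbb{C}),\tau\otimes\mathrm{tr})\cong L^2(\mathbb{T}^N)\otimes\mathbb{M}_n(\mathbb{C})$; $\eta$ canonical embedding, $\mathfrak{H}_n^\infty=\eta(\mathbb{M}_n(\mathcal{A}_\theta^\infty))$, $D_k\eta(x)=\eta(\delta_k^{(n)}x)$ extended to its usual skew-adjoint domain (the partial derivative), $\pi(a)\eta(x)=\eta(ax)$. $\Delta=-\sum_kD_k^2$ with $\mathcal{D}(\Delta)=\operatorname{span}\{\eta(\sum_\alpha c_\alpha u^\alpha\otimes m):(\|\alpha\|_2^2c_\alpha)_\alpha\in\ell^2(\mathbb{Z}^N)\}$; $\pi(h_k)$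 preserves $\mathcal{D}(\Delta)$ so $H$ is well defined there. A compatible connection on $\mathfrak{H}_n^\infty$ is an $N$-tuple of linear maps $\nabla_k$ with $\nabla_k(\xi a)=(\nabla_k\xi)a+\xi\delta_k^{(n)}(a)$ and $(\nabla_kx)^*y+x^*\nabla_ky=\delta_k^{(n)}(x^*y)$; every such has the form $D_k+\pi(h_k)$ with unique skew-adjoint $h_k\in\mathbb{M}_n(\mathcal{A}_\theta^\infty)$. *)

theory Defs
  imports "HOL-Analysis.Analysis"
begin

text \<open>The GNS space of (A_theta (x) M_n, tau (x) tr) has the
orthonormal basis u^alpha (alpha in Z^N) tensored with matrix units, so
H_n = l^2(Z^N; M_n(C)): a vector is its coefficient function
xi : Z^N -> M_n(C), xi = sum_alpha u^alpha (x) xi(alpha).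
Convention: u^alpha = u_1^alpha_1 ... u_N^alpha_N, the order of the
generators being the linear order of the index type 'N.\<close>

class idx = finite + linorder

type_synonym ('N, 'n) coeff = "(int, 'N) vec \<Rightarrow> complex ^ 'n ^ 'n"

definition cmat_scale :: "complex \<Rightarrow> complex ^ 'n ^ 'n \<Rightarrow> complex ^ 'n ^ 'n" where
  "cmat_scale c M = (\<chi> i j. c * M $ i $ j)"

definition cmat_adj :: "complex ^ 'n ^ 'n \<Rightarrow> complex ^ 'n ^ 'n" where
  "cmat_adj M = (\<chi> i j. cnj (M $ j $ i))"

text \<open>Hilbert--Schmidt (unnormalised trace) inner product tr(A^* B).\<close>
definition cmat_inner :: "complex ^ 'n ^ 'n \<Rightarrow> complex ^ 'n ^ 'n \<Rightarrow> complex" where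
  "cmat_inner A B = (\<Sum>i\<in>UNIV. \<Sum>j\<in>UNIV. cnj (A $ i $ j) * B $ i $ j)"

definition L2 :: "('N::finite, 'n::finite) coeff set" where
  "L2 = {xi. (\<lambda>\<alpha>. (norm (xi \<alpha>))\<^sup>2) summable_on UNIV}"

definition hinner :: "('N::finite, 'n::finite) coeff \<Rightarrow> ('N, 'n) coeff \<Rightarrow> complex" where
  "hinner xi eta = (\<Sum>\<^sub>\<infinity>\<alpha>. cmat_inner (xi \<alpha>) (eta \<alpha>))"

definition msq :: "(int, 'N::finite) vec \<Rightarrow> real" where
  "msq \<alpha> = (\<Sum>k\<in>UNIV. (real_of_int (\<alpha> $ k))\<^sup>2)"

text \<open>Commutation phase: u^alpha u^beta = twist theta alpha beta * u^(alpha+beta).\<close>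
definition twist :: "((real, 'N::idx) vec, 'N) vec \<Rightarrow> (int, 'N) vec \<Rightarrow> (int, 'N) vec \<Rightarrow> complex"
  where "twist \<theta> \<alpha> \<beta> =
    exp (2 * pi * \<i> * complex_of_real
      (\<Sum>k\<in>UNIV. \<Sum>l\<in>UNIV.
          if l < k then \<theta> $ k $ l * real_of_int (\<alpha> $ k) * real_of_int (\<beta> $ l) else 0))"

text \<open>Elements of M_n(A_theta^infty): rapidly decreasing coefficient functions.\<close>
definition smooth_elt :: "('N::finite, 'n::finite) coeff \<Rightarrow> bool" where
  "smooth_elt a \<longleftrightarrow> (\<forall>p::nat. \<exists>C. \<forall>\<alpha>. (1 + msq \<alpha>) ^ p * norm (a \<alpha>) \<le> C)"

text \<open>Involution of M_n(A_theta): (m u^beta)^* = m^* (u^beta)^*,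
 (u^beta)^* = cnj(twist (-beta) beta) u^(-beta).\<close>
definition nc_star :: "((real, 'N::idx) vec, 'N) vec \<Rightarrow> ('N, 'n::finite) coeff \<Rightarrow> ('N, 'n) coeff" where
  "nc_star \<theta> a = (\<lambda>\<gamma>. cmat_scale (cnj (twist \<theta> \<gamma> (- \<gamma>))) (cmat_adj (a (- \<gamma>))))"

text \<open>Left multiplication pi(a) (twisted convolution).\<close>
definition piop :: "((real, 'N::idx) vec, 'N) vec \<Rightarrow> ('N, 'n::finite) coeff \<Rightarrow> ('N, 'n) coeff \<Rightarrow> ('N, 'n) coeff" where
  "piop \<theta> a xi = (\<lambda>\<alpha>. \<Sum>\<^sub>\<infinity>\<beta>. cmat_scale (twist \<theta> \<beta> (\<alpha> - \<beta>)) (a \<beta> ** xi (\<alpha> - \<beta>)))"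

definition Dop :: "'N \<Rightarrow> ('N::finite, 'n::finite) coeff \<Rightarrow> ('N, 'n) coeff" where
  "Dop k xi = (\<lambda>\<alpha>. cmat_scale (\<i> * of_int (\<alpha> $ k)) (xi \<alpha>))"

definition nabla :: "((real, 'N::idx) vec, 'N) vec \<Rightarrow> ('N \<Rightarrow> ('N, 'n::finite) coeff) \<Rightarrow> 'N \<Rightarrow> ('N, 'n) coeff \<Rightarrow> ('N, 'n) coeff" where
  "nabla \<theta> h k xi = (\<lambda>\<alpha>. Dop k xi \<alpha> + piop \<theta> (h k) xi \<alpha>)"

definition Hop :: "((real, 'N::idx) vec, 'N) vec \<Rightarrow> ('N \<Rightarrow> ('N, 'n::finite) coeff) \<Rightarrow> ('N, 'n) coeff \<Rightarrow> ('N, 'n) coeff" where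
  "Hop \<theta> h xi = (\<lambda>\<alpha>. - (\<Sum>k\<in>UNIV. nabla \<theta> h k (nabla \<theta> h k xi) \<alpha>))"

definition dom_Delta :: "('N::finite, 'n::finite) coeff set" where
  "dom_Delta = {xi \<in> L2. (\<lambda>\<alpha>. cmat_scale (complex_of_real (msq \<alpha>)) (xi \<alpha>)) \<in> L2}"

text \<open>Self-adjointness of an (unbounded) operator T with domain D in L2:
densely defined, and T equals its Hilbert-space adjoint T^* (same domain, same action).\<close>
definition self_adjoint_op :: "(('N::finite, 'n::finite) coeff \<Rightarrow> ('N, 'n) coeff) \<Rightarrow> ('N, 'n) coeff set \<Rightarrow> bool" where
  "self_adjoint_op T D \<longleftrightarrow>
     D \<subseteq> L2 \<and> T ` D \<subseteq> L2 \<and>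
     (\<forall>xi\<in>L2. \<forall>e>0. \<exists>psi\<in>D. (\<Sum>\<^sub>\<infinity>\<alpha>. (norm (xi \<alpha> - psi \<alpha>))\<^sup>2) < e) \<and>
     (\<forall>eta\<in>L2. eta \<in> D \<longleftrightarrow> (\<exists>zeta\<in>L2. \<forall>xi\<in>D. hinner (T xi) eta = hinner xi zeta)) \<and>
     (\<forall>xi\<in>D. \<forall>eta\<in>D. hinner (T xi) eta = hinner xi (T eta))"

end

theory Submission
  imports Defs
begin

lemma norm_row: "norm (x :: complex ^ 'n) = L2_set (\<lambda>i. cmod (x $ i)) UNIV"
  unfolding norm_vec_def by (rule refl)

lemma norm_mat: "norm (A :: complex ^ 'n ^ 'm) = L2_set (\<lambda>i. norm (A $ i)) UNIV"
  unfolding norm_vec_def[of A] by (rule refl)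

lemma normsq_row: "(norm (x :: complex ^ 'n))\<^sup>2 = (\<Sum>i\<in>UNIV. (cmod (x $ i))\<^sup>2)"
  unfolding norm_row L2_set_def by (rule real_sqrt_pow2) (simp add: sum_nonneg)

lemma normsq_mat: "(norm (A :: complex ^ 'n ^ 'm))\<^sup>2 = (\<Sum>i\<in>UNIV. \<Sum>j\<in>UNIV. (cmod (A $ i $ j))\<^sup>2)"
proof -
  have "(norm A)\<^sup>2 = (\<Sum>i\<in>UNIV. (norm (A $ i))\<^sup>2)"
    unfolding norm_mat L2_set_def by (rule real_sqrt_pow2) (simp add: sum_nonneg)
  also have "\<dots> = (\<Sum>i\<in>UNIV. \<Sum>j\<in>UNIV. (cmod (A $ i $ j))\<^sup>2)"
    by (rule sum.cong[OF refl], rule normsq_row)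
  finally show ?thesis .
qed

lemma norm_entry_le: "cmod (A $ i $ j) \<le> norm (A :: complex ^ 'n ^ 'm)"
  using Finite_Cartesian_Product.norm_nth_le[of "A $ i" j] Finite_Cartesian_Product.norm_nth_le[of A i] by (metis order_trans)
lemma norm_mat_mult: "norm ((A :: complex ^ 'k ^ 'm) ** (B :: complex ^ 'n ^ 'k)) \<le> norm A * norm B"
proof -
  define c where "c j = L2_set (\<lambda>k. cmod (B $ k $ j)) UNIV" for j
  have e: "cmod ((A ** B) $ i $ j) \<le> norm (A $ i) * c j" for i j
  proof -
    have "cmod ((A ** B) $ i $ j) = cmod (\<Sum>k\<in>UNIV. A $ i $ k * B $ k $ j)"
      by (simp add: matrix_matrix_mult_def)
    also have "\<dots> \<le> (\<Sum>k\<in>UNIV. \<bar>cmod (A $ i $ k)\<bar> * \<bar>cmod (B $ k $ j)\<bar>)"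
      by (rule order_trans[OF norm_sum]) (simp add: norm_mult)
    also have "\<dots> \<le> norm (A $ i) * c j"
      unfolding c_def norm_row by (rule L2_set_mult_ineq)
    finally show ?thesis .
  qed
  have "(norm (A ** B))\<^sup>2 = (\<Sum>i\<in>UNIV. \<Sum>j\<in>UNIV. (cmod ((A ** B) $ i $ j))\<^sup>2)"
    by (rule normsq_mat)
  also have "\<dots> \<le> (\<Sum>i\<in>UNIV. \<Sum>j\<in>UNIV. (norm (A $ i))\<^sup>2 * (c j)\<^sup>2)"
    by (intro sum_mono) (metis e norm_ge_zero power_mono power_mult_distrib)
  also have "\<dots> = (\<Sum>i\<in>UNIV. (norm (A $ i))\<^sup>2) * (\<Sum>j\<in>UNIV. (c j)\<^sup>2)"
    by (simp add: sum_product)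
  also have "(\<Sum>i\<in>UNIV. (norm (A $ i))\<^sup>2) = (norm A)\<^sup>2"
    unfolding norm_mat L2_set_def by (rule real_sqrt_pow2[symmetric]) (simp add: sum_nonneg)
  also have "(\<Sum>j\<in>UNIV. (c j)\<^sup>2) = (\<Sum>j\<in>UNIV. \<Sum>k\<in>UNIV. (cmod (B $ k $ j))\<^sup>2)"
    unfolding c_def L2_set_def by (rule sum.cong[OF refl], rule real_sqrt_pow2) (simp add: sum_nonneg)
  also have "\<dots> = (norm B)\<^sup>2"
    unfolding normsq_mat by (rule sum.swap)
  finally have "(norm (A ** B))\<^sup>2 \<le> (norm A * norm B)\<^sup>2"
    by (simp add: power_mult_distrib)
  then show ?thesis
    by (meson mult_nonneg_nonneg norm_ge_zero power2_le_imp_le)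
qed

lemma norm_cmat_inner: "cmod (cmat_inner A B) \<le> norm A * norm B"
proof -
  have "cmod (cmat_inner A B) \<le> (\<Sum>i\<in>UNIV. \<Sum>j\<in>UNIV. \<bar>cmod (A $ i $ j)\<bar> * \<bar>cmod (B $ i $ j)\<bar>)"
    unfolding cmat_inner_def
    by (rule order_trans[OF norm_sum], rule sum_mono, rule order_trans[OF norm_sum])
       (simp add: norm_mult)
  also have "\<dots> \<le> (\<Sum>i\<in>UNIV. \<bar>norm (A $ i)\<bar> * \<bar>norm (B $ i)\<bar>)"
  proof (rule sum_mono)
    fix i
    have "(\<Sum>j\<in>UNIV. \<bar>cmod (A $ i $ j)\<bar> * \<bar>cmod (B $ i $ j)\<bar>) \<le> L2_set (\<lambda>j. cmod (A $ i $ j)) UNIV * L2_set (\<lambda>j. cmod (B $ i $ j)) UNIV"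
      by (rule L2_set_mult_ineq)
    then show "(\<Sum>j\<in>UNIV. \<bar>cmod (A $ i $ j)\<bar> * \<bar>cmod (B $ i $ j)\<bar>) \<le> \<bar>norm (A $ i)\<bar> * \<bar>norm (B $ i)\<bar>"
      by (simp add: norm_row)
  qed
  also have "\<dots> \<le> norm A * norm B"
    unfolding norm_mat by (rule L2_set_mult_ineq)
  finally show ?thesis .
qed

lemma norm_cmat_scale: "norm (cmat_scale c A) = cmod c * norm A"
proof -
  have "(norm (cmat_scale c A))\<^sup>2 = (cmod c * norm A)\<^sup>2"
    unfolding normsq_mat power_mult_distrib
    by (simp add: cmat_scale_def norm_mult power_mult_distrib sum_distrib_left)
  then show ?thesis
    by (meson mult_nonneg_nonneg norm_ge_zero power2_eq_iff_nonneg)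
qed

lemma norm_cmat_adj: "norm (cmat_adj A) = norm A"
proof -
  have "(norm (cmat_adj A))\<^sup>2 = (norm A)\<^sup>2"
    unfolding normsq_mat by (simp add: cmat_adj_def) (rule sum.swap)
  then show ?thesis
    by (meson norm_ge_zero power2_eq_iff_nonneg)
qed

lemma cmat_inner_add_left: "cmat_inner (A + B) C = cmat_inner A C + cmat_inner B C"
  by (simp add: cmat_inner_def algebra_simps sum.distrib)

lemma cmat_inner_add_right: "cmat_inner A (B + C) = cmat_inner A B + cmat_inner A C"
  by (simp add: cmat_inner_def algebra_simps sum.distrib)

lemma cmat_inner_minus_left: "cmat_inner (- A) C = - cmat_inner A C"
  by (simp add: cmat_inner_def sum_negf)

lemma cmat_inner_minus_right: "cmat_inner A (- C) = - cmat_inner A C"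
  by (simp add: cmat_inner_def sum_negf)

lemma cmat_inner_sum_left: "cmat_inner (\<Sum>k\<in>S. A k) C = (\<Sum>k\<in>S. cmat_inner (A k) C)"
  by (induction S rule: infinite_finite_induct)
     (auto simp: cmat_inner_add_left, simp_all add: cmat_inner_def)

lemma cmat_inner_sum_right: "cmat_inner C (\<Sum>k\<in>S. A k) = (\<Sum>k\<in>S. cmat_inner C (A k))"
  by (induction S rule: infinite_finite_induct)
     (auto simp: cmat_inner_add_right, simp_all add: cmat_inner_def)

lemma cmat_inner_scale_left: "cmat_inner (cmat_scale c A) B = cnj c * cmat_inner A B"
  by (simp add: cmat_inner_def cmat_scale_def sum_distrib_left mult.assoc)

lemma cmat_inner_scale_right: "cmat_inner A (cmat_scale c B) = c * cmat_inner A B"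
  by (simp add: cmat_inner_def cmat_scale_def sum_distrib_left algebra_simps)

lemma cmat_inner_cnj: "cmat_inner A B = cnj (cmat_inner B A)"
  by (simp add: cmat_inner_def mult.commute)

lemma cmat_inner_mult_left:
  "cmat_inner ((A :: complex ^ 'n ^ 'n) ** (B :: complex ^ 'n ^ 'n)) C = cmat_inner B (cmat_adj A ** C)"
proof -
  have "cmat_inner (A ** B) C = (\<Sum>i\<in>UNIV. \<Sum>j\<in>UNIV. \<Sum>k\<in>UNIV. cnj (A $ i $ k) * cnj (B $ k $ j) * C $ i $ j)"
    by (simp add: cmat_inner_def matrix_matrix_mult_def sum_distrib_right)
  also have "\<dots> = (\<Sum>i\<in>UNIV. \<Sum>k\<in>UNIV. \<Sum>j\<in>UNIV. cnj (A $ i $ k) * cnj (B $ k $ j) * C $ i $ j)"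
    by (rule sum.cong[OF refl], rule sum.swap)
  also have "\<dots> = (\<Sum>k\<in>UNIV. \<Sum>i\<in>UNIV. \<Sum>j\<in>UNIV. cnj (A $ i $ k) * cnj (B $ k $ j) * C $ i $ j)"
    by (rule sum.swap)
  also have "\<dots> = (\<Sum>k\<in>UNIV. \<Sum>j\<in>UNIV. \<Sum>i\<in>UNIV. cnj (A $ i $ k) * cnj (B $ k $ j) * C $ i $ j)"
    by (rule sum.cong[OF refl], rule sum.swap)
  also have "\<dots> = cmat_inner B (cmat_adj A ** C)"
    by (simp add: cmat_inner_def matrix_matrix_mult_def cmat_adj_def sum_distrib_left algebra_simps)
  finally show ?thesis .
qed

lemma cmat_scale_mult_left: "cmat_scale c A ** B = cmat_scale c (A ** B)"
  by (simp add: cmat_scale_def matrix_matrix_mult_def vec_eq_iff sum_distrib_left mult.assoc)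

lemma cmat_scale_scale: "cmat_scale c (cmat_scale d A) = cmat_scale (c * d) A"
  by (simp add: cmat_scale_def vec_eq_iff mult.assoc)

lemma cmat_scale_one[simp]: "cmat_scale 1 A = A"
  by (simp add: cmat_scale_def vec_eq_iff)

lemma cmat_scale_minus: "cmat_scale (- c) A = - cmat_scale c A"
  by (simp add: cmat_scale_def vec_eq_iff)

lemma cmat_scale_add: "cmat_scale c (A + B) = cmat_scale c A + cmat_scale c B"
  by (simp add: cmat_scale_def vec_eq_iff algebra_simps)

lemma cmat_scale_add_left: "cmat_scale (c + d) A = cmat_scale c A + cmat_scale d A"
  by (simp add: cmat_scale_def vec_eq_iff algebra_simps)

lemma cmat_adj_scale: "cmat_adj (cmat_scale c A) = cmat_scale (cnj c) (cmat_adj A)"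
  by (simp add: cmat_scale_def cmat_adj_def vec_eq_iff)

lemma cmat_adj_adj[simp]: "cmat_adj (cmat_adj A) = A"
  by (simp add: cmat_adj_def vec_eq_iff)

lemma bounded_linear_cmat_inner_right: "bounded_linear (\<lambda>B. cmat_inner A B)"
proof (rule bounded_linear_intro[where K = "norm A"])
  show "cmat_inner A (B + C) = cmat_inner A B + cmat_inner A C" for B C
    by (rule cmat_inner_add_right)
  show "cmat_inner A (r *\<^sub>R B) = r *\<^sub>R cmat_inner A B" for r B
    by (simp add: cmat_inner_def scaleR_sum_right)
  show "norm (cmat_inner A B) \<le> norm B * norm A" for B
    using norm_cmat_inner[of A B] by (simp add: mult.commute)
qed



definition tw :: "real \<Rightarrow> complex" where
  "tw x = exp (2 * pi * \<i> * complex_of_real x)"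

definition bf :: "((real, 'N::idx) vec, 'N) vec \<Rightarrow> (int, 'N) vec \<Rightarrow> (int, 'N) vec \<Rightarrow> real" where
  "bf \<theta> a b = (\<Sum>k\<in>UNIV. \<Sum>l\<in>UNIV. (if l < k then \<theta> $ k $ l else 0) * real_of_int (a $ k) * real_of_int (b $ l))"

lemma twist_tw: "twist \<theta> a b = tw (bf \<theta> a b)"
proof -
  have "(\<Sum>k\<in>UNIV. \<Sum>l\<in>UNIV. if l < k then \<theta> $ k $ l * real_of_int (a $ k) * real_of_int (b $ l) else 0) = bf \<theta> a b"
    unfolding bf_def by (intro sum.cong refl) simp
  then show ?thesis unfolding twist_def tw_def by simp
qed

lemma tw_add: "tw (x + y) = tw x * tw y"
  unfolding tw_def by (simp add: distrib_left exp_add)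

lemma tw_cnj: "cnj (tw x) = tw (- x)"
  unfolding tw_def by (simp add: exp_cnj)

lemma norm_tw[simp]: "norm (tw x) = 1"
  unfolding tw_def by (simp add: norm_exp_eq_Re)

lemma tw_mult_cnj: "tw x * cnj (tw x) = 1"
  by (simp only: tw_cnj tw_add[symmetric]) (simp add: tw_def)

lemma bf_add1: "bf \<theta> (a + b) c = bf \<theta> a c + bf \<theta> b c"
  unfolding bf_def by (simp add: algebra_simps sum.distrib)

lemma bf_add2: "bf \<theta> a (b + c) = bf \<theta> a b + bf \<theta> a c"
  unfolding bf_def by (simp add: algebra_simps sum.distrib)

lemma bf_minus1: "bf \<theta> (- a) b = - bf \<theta> a b"
  unfolding bf_def by (simp add: sum_negf)

lemma bf_minus2: "bf \<theta> a (- b) = - bf \<theta> a b"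
  unfolding bf_def by (simp add: sum_negf)

lemma bf_diff1: "bf \<theta> (a - b) c = bf \<theta> a c - bf \<theta> b c"
  using bf_add1[of \<theta> a "- b" c] bf_minus1[of \<theta> b c] by simp

lemma bf_diff2: "bf \<theta> a (b - c) = bf \<theta> a b - bf \<theta> a c"
  using bf_add2[of \<theta> a b "- c"] bf_minus2[of \<theta> a c] by simp

lemma norm_twist[simp]: "norm (twist \<theta> a b) = 1"
  by (simp add: twist_tw)

definition wt :: "(int, 'N::finite) vec \<Rightarrow> real" where
  "wt a = 1 + (\<Sum>k\<in>UNIV. \<bar>real_of_int (a $ k)\<bar>)"

lemma wt_ge1: "1 \<le> wt a"
  unfolding wt_def by (simp add: sum_nonneg)

lemma wt_pos: "0 < wt a"
  using wt_ge1[of a] by linarith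

lemma wt_nz[simp]: "wt a \<noteq> 0"
  using wt_pos[of a] by linarith

lemma wt_add: "wt (a + b) \<le> wt a * wt b"
proof -
  let ?A = "\<Sum>k\<in>UNIV. \<bar>real_of_int (a $ k)\<bar>" and ?B = "\<Sum>k\<in>UNIV. \<bar>real_of_int (b $ k)\<bar>"
  have "(\<Sum>k\<in>UNIV. \<bar>real_of_int ((a + b) $ k)\<bar>) \<le> (\<Sum>k\<in>UNIV. \<bar>real_of_int (a $ k)\<bar> + \<bar>real_of_int (b $ k)\<bar>)"
    by (intro sum_mono) simp
  also have "\<dots> = ?A + ?B" by (simp add: sum.distrib)
  finally have "(\<Sum>k\<in>UNIV. \<bar>real_of_int ((a + b) $ k)\<bar>) \<le> ?A + ?B" .
  moreover have "0 \<le> ?A * ?B" by (simp add: sum_nonneg)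
  moreover have "(1 + ?A) * (1 + ?B) = 1 + ?A + ?B + ?A * ?B" by (simp add: algebra_simps)
  ultimately show ?thesis unfolding wt_def by linarith
qed

lemma wt_uminus[simp]: "wt (- a) = wt a"
  unfolding wt_def by simp

lemma wt_diff: "wt (a - b) \<le> wt a * wt b"
  using wt_add[of a "- b"] by simp

lemma comp_le_wt: "\<bar>real_of_int (a $ k)\<bar> \<le> wt a"
proof -
  have "\<bar>real_of_int (a $ k)\<bar> \<le> (\<Sum>k\<in>UNIV. \<bar>real_of_int (a $ k)\<bar>)"
    by (rule member_le_sum) auto
  then show ?thesis unfolding wt_def by simp
qed

lemma sum_sq_le_sq_sum:
  assumes "\<And>i. 0 \<le> f i"
  shows "(\<Sum>i\<in>S. (f i)\<^sup>2) \<le> (\<Sum>i\<in>S. f i :: real)\<^sup>2"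
proof (induction S rule: infinite_finite_induct)
  case (insert x F)
  have "0 \<le> sum f F" by (simp add: assms sum_nonneg)
  then have "0 \<le> 2 * f x * sum f F" using assms[of x] by simp
  with insert show ?case by (simp add: power2_sum)
qed auto

lemma msq_le_wt: "msq a \<le> (wt a)\<^sup>2"
proof -
  have "msq a = (\<Sum>k\<in>UNIV. \<bar>real_of_int (a $ k)\<bar>\<^sup>2)" unfolding msq_def by simp
  also have "\<dots> \<le> (\<Sum>k\<in>UNIV. \<bar>real_of_int (a $ k)\<bar>)\<^sup>2"
    by (rule sum_sq_le_sq_sum) simp
  also have "\<dots> \<le> (wt a)\<^sup>2"
    unfolding wt_def by (rule power_mono) (auto simp: sum_nonneg)
  finally show ?thesis .
qed

lemma msq_nonneg: "0 \<le> msq a"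
  unfolding msq_def by (simp add: sum_nonneg)

lemma wt_sq_le: "(wt (a :: (int, 'N::finite) vec))\<^sup>2 \<le> (2 * (real CARD('N) + 1)) * (1 + msq a)"
proof -
  let ?S = "\<Sum>k\<in>(UNIV::'N set). \<bar>real_of_int (a $ k)\<bar>"
  have "?S = (\<Sum>k\<in>UNIV. \<bar>\<bar>real_of_int (a $ k)\<bar>\<bar> * \<bar>1\<bar>)" by simp
  also have "\<dots> \<le> L2_set (\<lambda>k. \<bar>real_of_int (a $ k)\<bar>) UNIV * L2_set (\<lambda>k. 1) (UNIV::'N set)"
    by (rule L2_set_mult_ineq[where f="\<lambda>k. \<bar>real_of_int (a $ k)\<bar>" and g="\<lambda>k. 1"])
  finally have "?S\<^sup>2 \<le> (L2_set (\<lambda>k. \<bar>real_of_int (a $ k)\<bar>) UNIV * L2_set (\<lambda>k. 1) (UNIV::'N set))\<^sup>2"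
    by (rule power_mono) (simp add: sum_nonneg)
  also have "\<dots> = msq a * real CARD('N)"
    unfolding L2_set_def msq_def power_mult_distrib
    by (simp add: sum_nonneg)
  finally have S: "?S\<^sup>2 \<le> msq a * real CARD('N)" .
  have "(wt a)\<^sup>2 = (1 + ?S)\<^sup>2" unfolding wt_def by simp
  also have "\<dots> \<le> 2 * (1 + ?S\<^sup>2)"
  proof -
    have "0 \<le> (?S - 1)\<^sup>2" by simp
    then show ?thesis by (simp add: power2_sum power2_diff)
  qed
  also have "\<dots> \<le> 2 * (1 + msq a * real CARD('N))" using S by simp
  also have "\<dots> \<le> (2 * (real CARD('N) + 1)) * (1 + msq a)"
    using msq_nonneg[of a] by (simp add: algebra_simps)
  finally show ?thesis .
qed

lemma wt_powr_shift: "wt a powr s \<le> wt b powr \<bar>s\<bar> * wt (a - b) powr s"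
proof (cases "s \<ge> 0")
  case True
  have "wt a = wt (b + (a - b))" by simp
  also have "\<dots> \<le> wt b * wt (a - b)" by (rule wt_add)
  finally have "wt a powr s \<le> (wt b * wt (a - b)) powr s"
    using wt_pos[of a] True by (intro powr_mono2) auto
  also have "\<dots> = wt b powr \<bar>s\<bar> * wt (a - b) powr s"
    using True wt_pos[of b] wt_pos[of "a - b"] by (simp add: powr_mult)
  finally show ?thesis .
next
  case False
  let ?t = "- s"
  have t: "?t > 0" using False by simp
  have "wt (a - b) \<le> wt a * wt b" by (rule wt_diff)
  then have "wt (a - b) powr ?t \<le> (wt a * wt b) powr ?t"
    using wt_pos[of "a - b"] t by (intro powr_mono2) auto
  also have "\<dots> = wt a powr ?t * wt b powr ?t"
    using wt_pos[of a] wt_pos[of b] by (simp add: powr_mult)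
  finally have 1: "wt (a - b) powr ?t \<le> wt a powr ?t * wt b powr ?t" .
  have pa: "0 < wt a powr ?t" "0 < wt (a - b) powr ?t" "0 < wt b powr ?t"
    using wt_pos by auto
  have "wt a powr s = 1 / wt a powr ?t" using wt_pos[of a] by (simp add: powr_minus divide_inverse)
  also have "\<dots> \<le> wt b powr ?t / wt (a - b) powr ?t"
    using 1 pa by (simp add: divide_simps mult.commute)
  also have "\<dots> = wt b powr \<bar>s\<bar> * wt (a - b) powr s"
    using False wt_pos[of "a - b"] by (simp add: powr_minus divide_inverse)
  finally show ?thesis .
qed

lemma wt_powr_pos: "0 < wt a powr s"
  using wt_pos by simp

lemma wt_powr_cancel: "wt a powr s * wt a powr (- s) = 1"
  using wt_pos[of a] by (simp add: powr_add[symmetric])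

lemma wt_powr_mono: "s \<le> t \<Longrightarrow> wt a powr s \<le> wt a powr t"
  using wt_ge1[of a] by (simp add: powr_mono)



section \<open>Weighted spaces\<close>

definition Wsp :: "real \<Rightarrow> ('N::finite, 'n::finite) coeff set" where
  "Wsp s = {xi. (\<lambda>\<alpha>. (wt \<alpha> powr s * norm (xi \<alpha>))\<^sup>2) summable_on UNIV}"

lemma Wsp_0: "Wsp 0 = L2"
  unfolding Wsp_def L2_def by simp

lemma Wsp_compare:
  fixes phi xi :: "('N::finite, 'n::finite) coeff"
  assumes xi: "xi \<in> Wsp t"
    and le: "\<And>\<alpha>. wt \<alpha> powr s * norm (phi \<alpha>) \<le> C * (wt \<alpha> powr t * norm (xi \<alpha>))"
  shows "phi \<in> Wsp s"
proof -
  have sx: "(\<lambda>\<alpha>. C\<^sup>2 * (wt \<alpha> powr t * norm (xi \<alpha>))\<^sup>2) summable_on UNIV"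
    using xi unfolding Wsp_def by (simp add: summable_on_cmult_right)
  show ?thesis unfolding Wsp_def
  proof (simp, rule summable_on_comparison_test[OF sx])
    fix \<alpha>
    have "(wt \<alpha> powr s * norm (phi \<alpha>))\<^sup>2 \<le> (C * (wt \<alpha> powr t * norm (xi \<alpha>)))\<^sup>2"
      by (rule power_mono[OF le[of \<alpha>]]) simp
    then show "(wt \<alpha> powr s * norm (phi \<alpha>))\<^sup>2 \<le> C\<^sup>2 * (wt \<alpha> powr t * norm (xi \<alpha>))\<^sup>2"
      by (simp add: power_mult_distrib)
  qed simp
qed

lemma Wsp_mono: "s \<le> t \<Longrightarrow> xi \<in> Wsp t \<Longrightarrow> xi \<in> Wsp s"
  by (rule Wsp_compare[where C=1 and t=t]) (auto intro!: mult_right_mono wt_powr_mono)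

lemma Wsp_add:
  fixes phi psi :: "('N::finite, 'n::finite) coeff"
  assumes "phi \<in> Wsp s" "psi \<in> Wsp s"
  shows "(\<lambda>\<alpha>. phi \<alpha> + psi \<alpha>) \<in> Wsp s"
proof -
  have sx: "(\<lambda>\<alpha>. 2 * (wt \<alpha> powr s * norm (phi \<alpha>))\<^sup>2 + 2 * (wt \<alpha> powr s * norm (psi \<alpha>))\<^sup>2) summable_on UNIV"
    using assms unfolding Wsp_def by (intro summable_on_add summable_on_cmult_right) auto
  show ?thesis unfolding Wsp_def
  proof (simp, rule summable_on_comparison_test[OF sx])
    fix \<alpha> :: "(int, 'N) vec"
    let ?w = "wt \<alpha> powr s"
    have "?w * norm (phi \<alpha> + psi \<alpha>) \<le> ?w * norm (phi \<alpha>) + ?w * norm (psi \<alpha>)"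
      by (metis distrib_left mult_left_mono norm_triangle_ineq wt_powr_pos less_imp_le)
    then have "(?w * norm (phi \<alpha> + psi \<alpha>))\<^sup>2 \<le> (?w * norm (phi \<alpha>) + ?w * norm (psi \<alpha>))\<^sup>2"
      by (intro power_mono) auto
    also have "\<dots> \<le> 2 * (?w * norm (phi \<alpha>))\<^sup>2 + 2 * (?w * norm (psi \<alpha>))\<^sup>2"
    proof -
      have "0 \<le> (?w * norm (phi \<alpha>) - ?w * norm (psi \<alpha>))\<^sup>2" by simp
      then show ?thesis by (simp add: power2_sum power2_diff)
    qed
    finally show "(?w * norm (phi \<alpha> + psi \<alpha>))\<^sup>2 \<le> 2 * (?w * norm (phi \<alpha>))\<^sup>2 + 2 * (?w * norm (psi \<alpha>))\<^sup>2" .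
  qed simp
qed

lemma Wsp_uminus: "phi \<in> Wsp s \<Longrightarrow> (\<lambda>\<alpha>. - phi \<alpha>) \<in> Wsp s"
  by (rule Wsp_compare[where C=1 and t=s]) auto

lemma Wsp_zero: "(\<lambda>\<alpha>. 0) \<in> Wsp s"
  unfolding Wsp_def by simp

lemma Wsp_diff: "phi \<in> Wsp s \<Longrightarrow> psi \<in> Wsp s \<Longrightarrow> (\<lambda>\<alpha>. phi \<alpha> - psi \<alpha>) \<in> Wsp s"
  using Wsp_add[of phi s "\<lambda>\<alpha>. - psi \<alpha>"] Wsp_uminus[of psi s] by simp

lemma Wsp_sum:
  assumes "\<And>k. k \<in> S \<Longrightarrow> f k \<in> Wsp s"
  shows "(\<lambda>\<alpha>. \<Sum>k\<in>S. f k \<alpha>) \<in> Wsp s"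
  using assms
proof (induction S rule: infinite_finite_induct)
  case (infinite A) then show ?case by (simp add: Wsp_zero)
next
  case empty then show ?case by (simp add: Wsp_zero)
next
  case (insert x F)
  then show ?case by (simp add: Wsp_add)
qed

lemma single_le_infsum:
  fixes f :: "'a \<Rightarrow> real"
  assumes "f summable_on UNIV" "\<And>x. 0 \<le> f x"
  shows "f x \<le> infsum f UNIV"
  using finite_sum_le_infsum[OF assms(1), of "{x}"] assms(2) by simp

lemma Wsp_bound:
  assumes "xi \<in> Wsp s"
  shows "\<exists>M. \<forall>\<alpha>. wt \<alpha> powr s * norm (xi \<alpha>) \<le> M"
proof -
  let ?f = "\<lambda>\<alpha>. (wt \<alpha> powr s * norm (xi \<alpha>))\<^sup>2"
  have "?f \<alpha> \<le> infsum ?f UNIV" for \<alpha>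
    using assms unfolding Wsp_def by (intro single_le_infsum) auto
  then have "wt \<alpha> powr s * norm (xi \<alpha>) \<le> sqrt (infsum ?f UNIV)" for \<alpha>
    by (rule real_le_rsqrt)
  then show ?thesis by blast
qed

lemma Wsp_finite_support:
  assumes "finite F" "\<And>\<alpha>. \<alpha> \<notin> F \<Longrightarrow> xi \<alpha> = 0"
  shows "xi \<in> Wsp s"
proof -
  have 1: "(\<lambda>\<alpha>. (wt \<alpha> powr s * norm (xi \<alpha>))\<^sup>2) summable_on F"
    using assms(1) by simp
  have "((\<lambda>\<alpha>. (wt \<alpha> powr s * norm (xi \<alpha>))\<^sup>2) summable_on F) = ((\<lambda>\<alpha>. (wt \<alpha> powr s * norm (xi \<alpha>))\<^sup>2) summable_on UNIV)"
    by (rule summable_on_cong_neutral) (use assms in auto)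
  then show ?thesis unfolding Wsp_def using 1 by simp
qed

section \<open>Lattice sums and rapid decay\<close>

definition g1 :: "int \<Rightarrow> real" where "g1 j = 1 / (1 + \<bar>real_of_int j\<bar>)\<^sup>2"

lemma g1_nonneg: "0 \<le> g1 j"
  unfolding g1_def by simp

lemma g1_summable: "g1 summable_on UNIV"
proof -
  have s: "(\<lambda>n::nat. 1 / (1 + real n)\<^sup>2) summable_on UNIV"
    by (rule summable_nonneg_imp_summable_on) (use inverse_squares_sums sums_summable in auto)
  have "g1 summable_on (int ` UNIV)"
    by (subst summable_on_reindex) (auto simp: o_def g1_def add.commute intro: s)
  moreover have "g1 summable_on ((\<lambda>n. - int n) ` UNIV)"
    by (subst summable_on_reindex) (auto simp: inj_on_def o_def g1_def add.commute intro: s)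
  ultimately have "g1 summable_on (int ` UNIV \<union> (\<lambda>n. - int n) ` UNIV)"
    by (rule summable_on_union)
  also have "int ` UNIV \<union> (\<lambda>n. - int n) ` UNIV = UNIV"
  proof -
    have "x \<in> int ` UNIV \<union> (\<lambda>n. - int n) ` UNIV" for x
    proof (cases "x \<ge> 0")
      case True then show ?thesis by (metis UnI1 nonneg_int_cases rangeI)
    next
      case False then have "x = - int (nat (- x))" by simp
      then show ?thesis by blast
    qed
    then show ?thesis by blast
  qed
  finally show ?thesis .
qed

definition gprod :: "(int, 'N::finite) vec \<Rightarrow> real" where
  "gprod \<alpha> = (\<Prod>k\<in>UNIV. g1 (\<alpha> $ k))"

lemma gprod_summable: "(gprod :: (int, 'N::finite) vec \<Rightarrow> real) summable_on UNIV"
proof (rule nonneg_bdd_above_summable_on)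
  show "0 \<le> gprod x" for x :: "(int, 'N) vec"
    unfolding gprod_def by (simp add: prod_nonneg g1_nonneg)
  define M where "M = (\<Prod>k\<in>(UNIV::'N set). infsum g1 UNIV)"
  have bound: "sum gprod F \<le> M" if fin: "finite F" for F :: "(int, 'N) vec set"
  proof -
    define P where "P k = (\<lambda>\<alpha>. \<alpha> $ k) ` F" for k
    have finP: "finite (P k)" for k unfolding P_def using fin by simp
    define Box where "Box = vec_lambda ` (PiE UNIV P)"
    have FB: "F \<subseteq> Box"
    proof
      fix \<alpha> assume "\<alpha> \<in> F"
      then have "vec_nth \<alpha> \<in> PiE UNIV P" unfolding P_def by auto
      then show "\<alpha> \<in> Box" unfolding Box_def by (metis image_eqI vec_nth_inverse)
    qed
    have finB: "finite Box" unfolding Box_def using finP by (simp add: finite_PiE)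
    have "sum gprod F \<le> sum gprod Box"
      using FB finB by (intro sum_mono2) (auto simp: gprod_def prod_nonneg g1_nonneg)
    also have "sum gprod Box = (\<Sum>f\<in>PiE UNIV P. \<Prod>k\<in>UNIV. g1 (f k))"
      unfolding Box_def gprod_def
      by (subst sum.reindex) (auto simp: inj_on_def vec_eq_iff vec_lambda_inverse)
    also have "\<dots> = (\<Prod>k\<in>UNIV. \<Sum>j\<in>P k. g1 j)"
      by (rule prod_sum_PiE[symmetric]) (auto simp: finP)
    also have "\<dots> \<le> M"
      unfolding M_def
      by (intro prod_mono conjI sum_nonneg g1_nonneg finite_sum_le_infsum g1_summable finP) auto
    finally show ?thesis .
  qed
  show "bdd_above (sum (gprod :: (int, 'N) vec \<Rightarrow> real) ` {F. F \<subseteq> UNIV \<and> finite F})"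
    by (rule bdd_aboveI2[where M=M]) (use bound in auto)
qed

lemma gprod_lower: "wt (\<alpha> :: (int, 'N::finite) vec) powr (- 2 * real CARD('N)) \<le> gprod \<alpha>"
proof -
  have "(\<Prod>k\<in>(UNIV::'N set). 1 + \<bar>real_of_int (\<alpha> $ k)\<bar>) \<le> (\<Prod>k\<in>(UNIV::'N set). wt \<alpha>)"
  proof (intro prod_mono conjI)
    fix i :: 'N
    have "\<bar>real_of_int (\<alpha> $ i)\<bar> \<le> (\<Sum>k\<in>UNIV. \<bar>real_of_int (\<alpha> $ k)\<bar>)"
      by (rule member_le_sum) auto
    then show "1 + \<bar>real_of_int (\<alpha> $ i)\<bar> \<le> wt \<alpha>" unfolding wt_def by simp
  qed simp
  also have "\<dots> = wt \<alpha> ^ CARD('N)" by simp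
  finally have 1: "(\<Prod>k\<in>(UNIV::'N set). 1 + \<bar>real_of_int (\<alpha> $ k)\<bar>) \<le> wt \<alpha> ^ CARD('N)" .
  have pos: "0 < (\<Prod>k\<in>(UNIV::'N set). 1 + \<bar>real_of_int (\<alpha> $ k)\<bar>)"
    by (intro prod_pos) (auto simp: add_pos_nonneg)
  have e: "- 2 * real CARD('N) = - real (CARD('N) * 2)" by simp
  have "wt \<alpha> powr (- 2 * real CARD('N)) = inverse (wt \<alpha> ^ (CARD('N) * 2))"
    unfolding e powr_minus powr_realpow[OF wt_pos] ..
  also have "\<dots> = 1 / (wt \<alpha> ^ CARD('N))\<^sup>2"
    unfolding power_mult by (simp add: divide_inverse)
  finally have "wt \<alpha> powr (- 2 * real CARD('N)) = 1 / (wt \<alpha> ^ CARD('N))\<^sup>2" .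
  also have "\<dots> \<le> 1 / (\<Prod>k\<in>(UNIV::'N set). 1 + \<bar>real_of_int (\<alpha> $ k)\<bar>)\<^sup>2"
    using 1 pos by (intro divide_left_mono power_mono mult_pos_pos) auto
  also have "\<dots> = gprod \<alpha>"
    unfolding gprod_def g1_def prod_dividef prod_power_distrib by simp
  finally show ?thesis .
qed

definition rapid :: "('N::finite, 'n::finite) coeff \<Rightarrow> bool" where
  "rapid a \<longleftrightarrow> (\<forall>r. (\<lambda>\<beta>. wt \<beta> powr r * norm (a \<beta>)) summable_on UNIV)"

lemma smooth_rapid:
  assumes "smooth_elt (a :: ('N::finite, 'n::finite) coeff)"
  shows "rapid a"
  unfolding rapid_def
proof
  fix r :: real
  let ?q = "2 * real CARD('N)"
  let ?K = "2 * (real CARD('N) + 1)"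
  obtain p :: nat where p0: "(r + ?q) / 2 \<le> real p"
    using real_arch_simple by blast
  have p: "r + ?q \<le> 2 * real p" using p0 by (simp add: field_simps)
  obtain C where C: "\<And>\<alpha>. (1 + msq \<alpha>) ^ p * norm (a \<alpha>) \<le> C"
    using assms unfolding smooth_elt_def by blast
  have sg: "(\<lambda>\<alpha>. (?K ^ p * C) * gprod \<alpha>) summable_on UNIV"
    by (intro summable_on_cmult_right gprod_summable)
  show "(\<lambda>\<beta>. wt \<beta> powr r * norm (a \<beta>)) summable_on UNIV"
  proof (rule summable_on_comparison_test[OF sg])
    fix \<alpha> :: "(int, 'N) vec"
    have "wt \<alpha> powr r \<le> wt \<alpha> powr (2 * real p + - ?q)"
      by (rule wt_powr_mono) (use p in linarith)
    also have "\<dots> = wt \<alpha> powr (2 * real p) * wt \<alpha> powr (- ?q)"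
      by (rule powr_add)
    finally have w: "wt \<alpha> powr r \<le> wt \<alpha> powr (2 * real p) * wt \<alpha> powr (- ?q)" .
    have "wt \<alpha> powr (2 * real p) = wt \<alpha> ^ (2 * p)"
      using powr_realpow[OF wt_pos, of \<alpha> "2 * p"] by simp
    also have "\<dots> = ((wt \<alpha>)\<^sup>2) ^ p" by (rule power_mult)
    also have "\<dots> \<le> (?K * (1 + msq \<alpha>)) ^ p"
      by (intro power_mono wt_sq_le) simp
    finally have w2: "wt \<alpha> powr (2 * real p) \<le> ?K ^ p * (1 + msq \<alpha>) ^ p"
      by (simp add: power_mult_distrib)
    have "wt \<alpha> powr r * norm (a \<alpha>) \<le> (wt \<alpha> powr (2 * real p) * wt \<alpha> powr (- ?q)) * norm (a \<alpha>)"
      using w by (intro mult_right_mono) auto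
    also have "\<dots> \<le> (?K ^ p * (1 + msq \<alpha>) ^ p * wt \<alpha> powr (- ?q)) * norm (a \<alpha>)"
      using w2 by (intro mult_right_mono) auto
    also have "\<dots> = ?K ^ p * ((1 + msq \<alpha>) ^ p * norm (a \<alpha>)) * wt \<alpha> powr (- ?q)"
      by (simp add: algebra_simps)
    also have "\<dots> \<le> ?K ^ p * C * wt \<alpha> powr (- ?q)"
      using C[of \<alpha>] by (intro mult_right_mono mult_left_mono) auto
    also have "\<dots> \<le> ?K ^ p * C * gprod \<alpha>"
    proof -
      have "0 \<le> (1 + msq \<alpha>) ^ p * norm (a \<alpha>)"
        by (intro mult_nonneg_nonneg zero_le_power) (use msq_nonneg[of \<alpha>] in auto)
      then have "0 \<le> C" using C[of \<alpha>] by linarith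
      then show ?thesis using gprod_lower[of \<alpha>] by (intro mult_left_mono) auto
    qed
    finally show "wt \<alpha> powr r * norm (a \<alpha>) \<le> ?K ^ p * C * gprod \<alpha>" .
  qed simp
qed



lemma has_sum_shift:
  fixes f :: "'a::ab_group_add \<Rightarrow> 'b::topological_comm_monoid_add"
  shows "((\<lambda>x. f (x - b)) has_sum S) UNIV \<longleftrightarrow> (f has_sum S) UNIV"
  by (rule has_sum_reindex_bij_witness[where j="\<lambda>x. x - b" and i="\<lambda>x. x + b"]) auto

lemma summable_on_shift:
  fixes f :: "'a::ab_group_add \<Rightarrow> 'b::topological_comm_monoid_add"
  shows "(\<lambda>x. f (x - b)) summable_on UNIV \<longleftrightarrow> f summable_on UNIV"
  unfolding summable_on_def using has_sum_shift by blast

lemma infsum_shift: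
  fixes f :: "'a::ab_group_add \<Rightarrow> 'b::{topological_comm_monoid_add, t2_space}"
  shows "infsum (\<lambda>x. f (x - b)) UNIV = infsum f UNIV"
proof (cases "f summable_on UNIV")
  case True
  then show ?thesis using has_sum_shift[of f b "infsum f UNIV"]
    by (simp add: has_sum_infsum infsumI)
next
  case False
  then have "\<not> (\<lambda>x. f (x - b)) summable_on UNIV" using summable_on_shift by blast
  then show ?thesis using False by (simp add: infsum_not_exists)
qed

section \<open>Young's inequality\<close>

lemma cs_aux:
  fixes a b c :: real
  assumes "0 \<le> a" "0 \<le> b" "0 \<le> c" and le: "\<And>t. t > 0 \<Longrightarrow> c \<le> (t * a + b / t) / 2"
  shows "c\<^sup>2 \<le> a * b"
proof (cases "c = 0")
  case True then show ?thesis using assms by simp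
next
  case False
  then have c: "c > 0" using assms by simp
  show ?thesis
  proof (cases "a = 0")
    case True
    have "c \<le> (b / ((b + 1) / c)) / 2" using le[of "(b + 1) / c"] c True assms by simp
    also have "\<dots> = b * c / (2 * (b + 1))" using c by (simp add: field_simps)
    also have "\<dots> < c"
    proof -
      have e: "c * (2 * (b + 1)) = b * c + c * (b + 2)" by (simp add: algebra_simps)
      have "0 < c * (b + 2)" using c assms(2) by (intro mult_pos_pos) auto
      then have "b * c < c * (2 * (b + 1))" using e by linarith
      then show ?thesis using assms(2) by (subst pos_divide_less_eq) auto
    qed
    finally show ?thesis by simp
  next
    case False
    then have a: "a > 0" using assms by simp
    have "c \<le> (c / a * a + b / (c / a)) / 2" using le[of "c / a"] a c by simp
    also have "\<dots> = (c + a * b / c) / 2" using a c by (simp add: field_simps)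
    finally have "c \<le> a * b / c" by simp
    then show ?thesis using c by (simp add: field_simps power2_eq_square)
  qed
qed

lemma sq_summable_bound:
  fixes X :: "'a \<Rightarrow> real"
  assumes "(\<lambda>x. (X x)\<^sup>2) summable_on UNIV"
  shows "\<exists>M. \<forall>x. \<bar>X x\<bar> \<le> M"
proof -
  have "(X x)\<^sup>2 \<le> infsum (\<lambda>x. (X x)\<^sup>2) UNIV" for x
    by (rule single_le_infsum[OF assms]) simp
  then have "\<bar>X x\<bar> \<le> sqrt (infsum (\<lambda>x. (X x)\<^sup>2) UNIV)" for x
    by (simp add: real_le_rsqrt)
  then show ?thesis by blast
qed

lemma conv_summable:
  fixes A X :: "(int, 'N::finite) vec \<Rightarrow> real"
  assumes A: "A summable_on UNIV" "\<And>b. 0 \<le> A b"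
    and X: "(\<lambda>x. (X x)\<^sup>2) summable_on UNIV"
  shows "(\<lambda>b. A b * X (a - b)) summable_on UNIV"
    and "(\<lambda>b. A b * (X (a - b))\<^sup>2) summable_on UNIV"
proof -
  obtain M where M: "\<And>x. \<bar>X x\<bar> \<le> M" using sq_summable_bound[OF X] by blast
  have sM: "(\<lambda>b. M * A b) summable_on UNIV" by (intro summable_on_cmult_right A)
  have sM2: "(\<lambda>b. M\<^sup>2 * A b) summable_on UNIV" by (intro summable_on_cmult_right A)
  have "(\<lambda>b. norm (A b * X (a - b))) summable_on UNIV"
  proof (rule summable_on_comparison_test[OF sM])
    fix b show "norm (A b * X (a - b)) \<le> M * A b"
      using mult_left_mono[OF M[of "a - b"] A(2)[of b]] A(2)[of b] by (simp add: abs_mult mult.commute)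
  qed simp
  then show "(\<lambda>b. A b * X (a - b)) summable_on UNIV"
    by (rule summable_on_iff_abs_summable_on_real[THEN iffD2])
  show "(\<lambda>b. A b * (X (a - b))\<^sup>2) summable_on UNIV"
  proof (rule summable_on_comparison_test[OF sM2])
    fix b
    have "(X (a - b))\<^sup>2 \<le> M\<^sup>2"
      using power_mono[OF M[of "a - b"] abs_ge_zero, of 2] by simp
    then show "A b * (X (a - b))\<^sup>2 \<le> M\<^sup>2 * A b"
      using A(2)[of b] by (simp add: mult.commute mult_left_mono)
  qed (simp add: A(2))
qed

lemma young:
  fixes A X :: "(int, 'N::finite) vec \<Rightarrow> real"
  assumes A: "A summable_on UNIV" "\<And>b. 0 \<le> A b"
    and X: "(\<lambda>x. (X x)\<^sup>2) summable_on UNIV" "\<And>x. 0 \<le> X x"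
  shows "(\<lambda>a. (infsum (\<lambda>b. A b * X (a - b)) UNIV)\<^sup>2) summable_on UNIV"
proof -
  define SA where "SA = infsum A UNIV"
  define SX where "SX = infsum (\<lambda>x. (X x)\<^sup>2) UNIV"
  define E where "E a = infsum (\<lambda>b. A b * (X (a - b))\<^sup>2) UNIV" for a
  have SA0: "0 \<le> SA" unfolding SA_def by (simp add: A(2) infsum_nonneg)
  have E0: "0 \<le> E a" for a unfolding E_def by (intro infsum_nonneg) (simp add: A(2))
  have inner: "((\<lambda>x. A b * (X (x - b))\<^sup>2) has_sum (A b * SX)) UNIV" for b
  proof -
    have "((\<lambda>x. (X (x - b))\<^sup>2) has_sum SX) UNIV"
      unfolding SX_def has_sum_shift[of "\<lambda>x. (X x)\<^sup>2" b] using X(1) by (simp add: has_sum_infsum)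
    then show ?thesis by (rule has_sum_cmult_right)
  qed
  have "(\<lambda>(b, x). A b * (X (x - b))\<^sup>2) summable_on (UNIV \<times> UNIV)"
  proof -
    have "(\<lambda>p. A (fst p) * (X (snd p - fst p))\<^sup>2) summable_on Sigma UNIV (\<lambda>_. UNIV)"
      by (rule summable_on_SigmaI[where g="\<lambda>b. A b * SX"])
         (use inner in \<open>auto intro!: summable_on_cmult_left A(1) simp: A(2)\<close>)
    then show ?thesis by (simp add: case_prod_unfold)
  qed
  then have "(\<lambda>(x, b). A b * (X (x - b))\<^sup>2) summable_on (UNIV \<times> UNIV)"
    by (subst summable_on_swap) (simp add: case_prod_unfold)
  then have sE0: "(\<lambda>x. infsum (\<lambda>y. (\<lambda>(x, b). A b * (X (x - b))\<^sup>2) (x, y)) UNIV) summable_on UNIV"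
    by (rule summable_on_SigmaD) (simp add: conv_summable(2)[OF A X(1)])
  then have sE: "E summable_on UNIV" unfolding E_def by simp
  \<comment> \<open>Cauchy--Schwarz\<close>
  have cs: "(infsum (\<lambda>b. A b * X (a - b)) UNIV)\<^sup>2 \<le> SA * E a" for a
  proof (rule cs_aux[OF SA0 E0])
    show "0 \<le> infsum (\<lambda>b. A b * X (a - b)) UNIV"
      by (intro infsum_nonneg) (simp add: A(2) X(2))
    fix t :: real assume t: "t > 0"
    have s1: "(\<lambda>b. A b * X (a - b)) summable_on UNIV" by (rule conv_summable(1)[OF A X(1)])
    have s2: "(\<lambda>b. A b * (X (a - b))\<^sup>2) summable_on UNIV" by (rule conv_summable(2)[OF A X(1)])
    have s3: "(\<lambda>b. (t / 2) * A b + (1 / (2 * t)) * (A b * (X (a - b))\<^sup>2)) summable_on UNIV"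
      by (intro summable_on_add summable_on_cmult_right s2 A(1))
    have "infsum (\<lambda>b. A b * X (a - b)) UNIV \<le> infsum (\<lambda>b. (t / 2) * A b + (1 / (2 * t)) * (A b * (X (a - b))\<^sup>2)) UNIV"
    proof (rule infsum_mono[OF s1 s3])
      fix b
      have "2 * t * X (a - b) \<le> t\<^sup>2 + (X (a - b))\<^sup>2"
        using sum_squares_ge_zero[of "t - X (a - b)" 0] by (simp add: power2_diff power2_eq_square algebra_simps)
      then have "X (a - b) \<le> t / 2 + (1 / (2 * t)) * (X (a - b))\<^sup>2"
        using t by (simp add: field_simps power2_eq_square)
      then have "A b * X (a - b) \<le> A b * (t / 2 + (1 / (2 * t)) * (X (a - b))\<^sup>2)"
        using A(2)[of b] by (rule mult_left_mono)
      then show "A b * X (a - b) \<le> (t / 2) * A b + (1 / (2 * t)) * (A b * (X (a - b))\<^sup>2)"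
        by (simp add: algebra_simps)
    qed
    also have "\<dots> = (t / 2) * SA + (1 / (2 * t)) * E a"
    proof -
      have "infsum (\<lambda>b. (t / 2) * A b + (1 / (2 * t)) * (A b * (X (a - b))\<^sup>2)) UNIV
          = infsum (\<lambda>b. (t / 2) * A b) UNIV + infsum (\<lambda>b. (1 / (2 * t)) * (A b * (X (a - b))\<^sup>2)) UNIV"
        by (rule infsum_add) (intro summable_on_cmult_right A(1) s2)+
      also have "infsum (\<lambda>b. (t / 2) * A b) UNIV = (t / 2) * SA"
        unfolding SA_def by (rule infsum_cmult_right) (rule A(1))
      also have "infsum (\<lambda>b. (1 / (2 * t)) * (A b * (X (a - b))\<^sup>2)) UNIV = (1 / (2 * t)) * E a"
        unfolding E_def by (rule infsum_cmult_right) (rule s2)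
      finally show ?thesis .
    qed
    also have "\<dots> = (t * SA + E a / t) / 2" by (simp add: field_simps)
    finally show "infsum (\<lambda>b. A b * X (a - b)) UNIV \<le> (t * SA + E a / t) / 2" .
  qed
  have "(\<lambda>a. SA * E a) summable_on UNIV" by (intro summable_on_cmult_right sE)
  then show ?thesis
    by (rule summable_on_comparison_test) (use cs in auto)
qed



section \<open>Convolution\<close>

lemma term_norm_le:
  "norm (cmat_scale (twist \<theta> b c) (A ** B)) \<le> norm A * norm B"
  by (simp add: norm_cmat_scale norm_mat_mult)

lemma rapid_A:
  assumes "rapid a"
  shows "(\<lambda>b. wt b powr r * norm (a b)) summable_on UNIV"
  using assms unfolding rapid_def by blast

lemma conv_main:
  fixes a xi :: "('N::idx, 'n::finite) coeff"
  assumes ra: "rapid a" and xi: "xi \<in> Wsp s"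
  shows conv_abs: "(\<lambda>b. norm (cmat_scale (twist \<theta> b (x - b)) (a b ** xi (x - b)))) summable_on UNIV"
    and conv_Wsp: "piop \<theta> a xi \<in> Wsp s"
proof -
  define A where "A b = wt b powr \<bar>s\<bar> * norm (a b)" for b
  define X where "X c = wt c powr s * norm (xi c)" for c
  have sA: "A summable_on UNIV" unfolding A_def by (rule rapid_A[OF ra])
  have A0: "0 \<le> A b" for b unfolding A_def by simp
  have sX: "(\<lambda>c. (X c)\<^sup>2) summable_on UNIV" using xi unfolding X_def Wsp_def by simp
  have X0: "0 \<le> X c" for c unfolding X_def by simp
  have key: "wt y powr s * norm (cmat_scale (twist \<theta> b (y - b)) (a b ** xi (y - b))) \<le> A b * X (y - b)" for y b
  proof -
    have "wt y powr s * norm (cmat_scale (twist \<theta> b (y - b)) (a b ** xi (y - b)))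
        \<le> wt y powr s * (norm (a b) * norm (xi (y - b)))"
      by (intro mult_left_mono term_norm_le) simp
    also have "\<dots> \<le> (wt b powr \<bar>s\<bar> * wt (y - b) powr s) * (norm (a b) * norm (xi (y - b)))"
      by (intro mult_right_mono wt_powr_shift) simp
    also have "\<dots> = A b * X (y - b)" unfolding A_def X_def by (simp add: algebra_simps)
    finally show ?thesis .
  qed
  have key2: "norm (cmat_scale (twist \<theta> b (y - b)) (a b ** xi (y - b))) \<le> inverse (wt y powr s) * (A b * X (y - b))" for y b
    using key[of y b] wt_powr_pos[of y s] by (simp add: field_simps)
  have absy: "(\<lambda>b. norm (cmat_scale (twist \<theta> b (y - b)) (a b ** xi (y - b)))) summable_on UNIV" for y
    by (rule summable_on_comparison_test[OF summable_on_cmult_right[OF conv_summable(1)[OF sA A0 sX]] key2]) simp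
  then show "(\<lambda>b. norm (cmat_scale (twist \<theta> b (x - b)) (a b ** xi (x - b)))) summable_on UNIV" .
  define c where "c y = infsum (\<lambda>b. A b * X (y - b)) UNIV" for y
  have bound: "wt y powr s * norm (piop \<theta> a xi y) \<le> 1 * c y" for y
  proof -
    have "norm (piop \<theta> a xi y) \<le> infsum (\<lambda>b. norm (cmat_scale (twist \<theta> b (y - b)) (a b ** xi (y - b)))) UNIV"
      unfolding piop_def by (rule norm_infsum_bound) (rule absy)
    also have "\<dots> \<le> infsum (\<lambda>b. inverse (wt y powr s) * (A b * X (y - b))) UNIV"
      by (rule infsum_mono[OF absy summable_on_cmult_right[OF conv_summable(1)[OF sA A0 sX]] key2])
    also have "\<dots> = inverse (wt y powr s) * c y"
      unfolding c_def by (rule infsum_cmult_right) (rule conv_summable(1)[OF sA A0 sX])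
    finally show ?thesis using wt_powr_pos[of y s] by (simp add: field_simps)
  qed
  have sc: "(\<lambda>y. (c y)\<^sup>2) summable_on UNIV" unfolding c_def by (rule young[OF sA A0 sX X0])
  show "piop \<theta> a xi \<in> Wsp s"
    unfolding Wsp_def
  proof (simp, rule summable_on_comparison_test[OF sc])
    fix y
    have "(wt y powr s * norm (piop \<theta> a xi y))\<^sup>2 \<le> (c y)\<^sup>2"
      using bound[of y] by (intro power_mono) auto
    then show "(wt y powr s * norm (piop \<theta> a xi y))\<^sup>2 \<le> (c y)\<^sup>2" .
  qed simp
qed

lemma conv_summable_mat:
  fixes a xi :: "('N::idx, 'n::finite) coeff"
  assumes "rapid a" "xi \<in> Wsp s"
  shows "(\<lambda>b. cmat_scale (twist \<theta> b (x - b)) (a b ** xi (x - b))) summable_on UNIV"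
  by (rule abs_summable_summable[OF conv_abs[OF assms]])

lemma pair_abs:
  fixes xi eta :: "('N::finite, 'n::finite) coeff"
  assumes "xi \<in> Wsp s" "eta \<in> Wsp (- s)"
  shows "(\<lambda>x. norm (cmat_inner (xi x) (eta x))) summable_on UNIV"
proof -
  let ?X = "\<lambda>x. wt x powr s * norm (xi x)" and ?Y = "\<lambda>x. wt x powr (- s) * norm (eta x)"
  have s: "(\<lambda>x. (1 / 2) * ((?X x)\<^sup>2 + (?Y x)\<^sup>2)) summable_on UNIV"
    using assms unfolding Wsp_def by (intro summable_on_cmult_right summable_on_add) auto
  show ?thesis
  proof (rule summable_on_comparison_test[OF s])
    fix x
    have "norm (cmat_inner (xi x) (eta x)) \<le> norm (xi x) * norm (eta x)" by (rule norm_cmat_inner)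
    also have "\<dots> = ?X x * ?Y x"
      using wt_powr_cancel[of x s] by (simp add: algebra_simps)
    also have "\<dots> \<le> (1 / 2) * ((?X x)\<^sup>2 + (?Y x)\<^sup>2)"
      using sum_squares_ge_zero[of "?X x - ?Y x" 0] by (simp add: power2_diff power2_eq_square field_simps)
    finally show "norm (cmat_inner (xi x) (eta x)) \<le> (1 / 2) * ((?X x)\<^sup>2 + (?Y x)\<^sup>2)" .
  qed simp
qed

lemma pair_summable:
  fixes xi eta :: "('N::finite, 'n::finite) coeff"
  assumes "xi \<in> Wsp s" "eta \<in> Wsp (- s)"
  shows "(\<lambda>x. cmat_inner (xi x) (eta x)) summable_on UNIV"
  by (rule abs_summable_summable[OF pair_abs[OF assms]])

lemma hinner_add_left:
  fixes xi1 xi2 eta :: "('N::finite, 'n::finite) coeff"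
  assumes "xi1 \<in> Wsp s" "xi2 \<in> Wsp s" "eta \<in> Wsp (- s)"
  shows "hinner (\<lambda>x. xi1 x + xi2 x) eta = hinner xi1 eta + hinner xi2 eta"
  unfolding hinner_def cmat_inner_add_left
  by (rule infsum_add) (rule pair_summable[OF assms(1,3)], rule pair_summable[OF assms(2,3)])

lemma hinner_add_right:
  fixes xi eta1 eta2 :: "('N::finite, 'n::finite) coeff"
  assumes "xi \<in> Wsp s" "eta1 \<in> Wsp (- s)" "eta2 \<in> Wsp (- s)"
  shows "hinner xi (\<lambda>x. eta1 x + eta2 x) = hinner xi eta1 + hinner xi eta2"
  unfolding hinner_def cmat_inner_add_right
  by (rule infsum_add) (rule pair_summable[OF assms(1,2)], rule pair_summable[OF assms(1,3)])

lemma hinner_uminus_left: "hinner (\<lambda>x. - xi x) eta = - hinner xi eta"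
  unfolding hinner_def cmat_inner_minus_left by (rule infsum_uminus)

lemma hinner_uminus_right: "hinner xi (\<lambda>x. - eta x) = - hinner xi eta"
  unfolding hinner_def cmat_inner_minus_right by (rule infsum_uminus)

lemma hinner_sum_left:
  fixes f :: "'k \<Rightarrow> ('N::finite, 'n::finite) coeff"
  assumes "finite S" "\<And>k. k \<in> S \<Longrightarrow> f k \<in> Wsp s" "eta \<in> Wsp (- s)"
  shows "hinner (\<lambda>x. \<Sum>k\<in>S. f k x) eta = (\<Sum>k\<in>S. hinner (f k) eta)"
  using assms
proof (induction S rule: finite_induct)
  case empty
  then show ?case by (simp add: hinner_def cmat_inner_def)
next
  case (insert k F)
  have "hinner (\<lambda>x. \<Sum>k\<in>insert k F. f k x) eta = hinner (\<lambda>x. f k x + (\<Sum>k\<in>F. f k x)) eta"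
    using insert by simp
  also have "\<dots> = hinner (f k) eta + hinner (\<lambda>x. \<Sum>k\<in>F. f k x) eta"
    using insert by (intro hinner_add_left[where s=s] Wsp_sum) auto
  finally show ?case using insert by simp
qed

lemma hinner_sum_right:
  fixes f :: "'k \<Rightarrow> ('N::finite, 'n::finite) coeff"
  assumes "finite S" "\<And>k. k \<in> S \<Longrightarrow> f k \<in> Wsp (- s)" "xi \<in> Wsp s"
  shows "hinner xi (\<lambda>x. \<Sum>k\<in>S. f k x) = (\<Sum>k\<in>S. hinner xi (f k))"
  using assms
proof (induction S rule: finite_induct)
  case empty
  then show ?case by (simp add: hinner_def cmat_inner_def)
next
  case (insert k F)
  have "hinner xi (\<lambda>x. \<Sum>k\<in>insert k F. f k x) = hinner xi (\<lambda>x. f k x + (\<Sum>k\<in>F. f k x))"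
    using insert by simp
  also have "\<dots> = hinner xi (f k) + hinner xi (\<lambda>x. \<Sum>k\<in>F. f k x)"
    using insert by (intro hinner_add_right[where s=s] Wsp_sum) auto
  finally show ?case using insert by simp
qed

lemma Dop_skew: "hinner (Dop k xi) eta = - hinner xi (Dop k eta)"
proof -
  have "cmat_inner (Dop k xi x) (eta x) = - cmat_inner (xi x) (Dop k eta x)" for x
    unfolding Dop_def cmat_inner_scale_left cmat_inner_scale_right by simp
  then show ?thesis unfolding hinner_def by (simp add: infsum_uminus)
qed

lemma Dop_Wsp:
  fixes xi :: "('N::finite, 'n::finite) coeff"
  assumes "xi \<in> Wsp (s + 1)"
  shows "Dop k xi \<in> Wsp s"
proof (rule Wsp_compare[OF assms, where C=1])
  fix x
  have "norm (Dop k xi x) = \<bar>real_of_int (x $ k)\<bar> * norm (xi x)"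
    unfolding Dop_def norm_cmat_scale by (simp add: norm_mult)
  also have "\<dots> \<le> wt x * norm (xi x)" by (intro mult_right_mono comp_le_wt) simp
  finally have "wt x powr s * norm (Dop k xi x) \<le> wt x powr s * (wt x * norm (xi x))"
    by (intro mult_left_mono) auto
  also have "\<dots> = 1 * (wt x powr (s + 1) * norm (xi x))"
    using wt_pos[of x] by (simp add: powr_add)
  finally show "wt x powr s * norm (Dop k xi x) \<le> 1 * (wt x powr (s + 1) * norm (xi x))" .
qed



lemma inner_infsum_right:
  assumes "f summable_on A"
  shows "cmat_inner B (infsum f A) = infsum (\<lambda>x. cmat_inner B (f x)) A"
  using has_sum_bounded_linear[OF bounded_linear_cmat_inner_right has_sum_infsum[OF assms], of B]
  by (simp add: infsumI)

lemma inner_infsum_left: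
  assumes "f summable_on A"
  shows "cmat_inner (infsum f A) B = infsum (\<lambda>x. cmat_inner (f x) B) A"
proof -
  have "cmat_inner (infsum f A) B = cnj (cmat_inner B (infsum f A))" by (rule cmat_inner_cnj)
  also have "\<dots> = cnj (infsum (\<lambda>x. cmat_inner B (f x)) A)" by (simp add: inner_infsum_right[OF assms])
  also have "\<dots> = infsum (\<lambda>x. cnj (cmat_inner B (f x))) A" by simp
  also have "\<dots> = infsum (\<lambda>x. cmat_inner (f x) B) A" by (simp add: cmat_inner_cnj[of _ B])
  finally show ?thesis .
qed

lemma cmat_scale_uminus: "cmat_scale c (- A) = - cmat_scale c A"
  by (simp add: cmat_scale_def vec_eq_iff)

lemma mat_mult_uminus_left: "(- (A :: complex ^ 'n ^ 'n)) ** B = - (A ** B)"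
  by (simp add: matrix_matrix_mult_def vec_eq_iff sum_negf)

lemma skew_adj:
  assumes sk: "nc_star \<theta> a = (\<lambda>x. - a x)"
  shows "cmat_adj (a (- b)) = - cmat_scale (twist \<theta> b (- b)) (a b)"
proof -
  have "nc_star \<theta> a b = - a b" using sk by simp
  then have e: "cmat_scale (cnj (twist \<theta> b (- b))) (cmat_adj (a (- b))) = - a b"
    unfolding nc_star_def by simp
  have "cmat_adj (a (- b)) = cmat_scale (twist \<theta> b (- b) * cnj (twist \<theta> b (- b))) (cmat_adj (a (- b)))"
    by (simp add: twist_tw tw_mult_cnj)
  also have "\<dots> = cmat_scale (twist \<theta> b (- b)) (- a b)"
    by (simp add: cmat_scale_scale[symmetric] e)
  finally show ?thesis by (simp add: cmat_scale_uminus)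
qed

lemma twist_identity:
  "cnj (twist \<theta> (- b) y) * twist \<theta> b (- b) = twist \<theta> b (y - b)"
proof -
  have "- bf \<theta> (- b) y + bf \<theta> b (- b) = bf \<theta> b (y - b)"
    by (simp add: bf_minus1 bf_minus2 bf_diff2)
  then show ?thesis
    by (simp add: twist_tw tw_cnj tw_add[symmetric])
qed

lemma P_skew:
  fixes a xi eta :: "('N::idx, 'n::finite) coeff"
  assumes ra: "rapid a" and sk: "nc_star \<theta> a = (\<lambda>x. - a x)"
    and xi: "xi \<in> Wsp s" and eta: "eta \<in> Wsp (- s)"
  shows "hinner (piop \<theta> a xi) eta = - hinner xi (piop \<theta> a eta)"
proof -
  define T where "T x b = cmat_scale (twist \<theta> b (x - b)) (a b ** xi (x - b))" for x b
  define U where "U y b = cmat_scale (twist \<theta> b (y - b)) (a b ** eta (y - b))" for y b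
  define G where "G p = cmat_inner (T (fst p) (snd p)) (eta (fst p))" for p
  define H where "H p = - cmat_inner (xi (fst p)) (U (fst p) (snd p))" for p
  have sT: "T x summable_on UNIV" for x
    unfolding T_def by (rule conv_summable_mat[OF ra xi])
  have sU: "U y summable_on UNIV" for y
    unfolding U_def by (rule conv_summable_mat[OF ra eta])
  have step1: "hinner (piop \<theta> a xi) eta = infsum (\<lambda>x. infsum (\<lambda>b. G (x, b)) UNIV) UNIV"
  proof -
    have "piop \<theta> a xi x = infsum (T x) UNIV" for x unfolding piop_def T_def by simp
    then show ?thesis
      unfolding hinner_def G_def by (simp add: inner_infsum_left[OF sT])
  qed
  define A where "A b = wt b powr \<bar>s\<bar> * norm (a b)" for b
  define X where "X c = wt c powr s * norm (xi c)" for c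
  define Y where "Y c = wt c powr (- s) * norm (eta c)" for c
  have sA: "A summable_on UNIV" unfolding A_def by (rule rapid_A[OF ra])
  have A0: "0 \<le> A b" for b unfolding A_def by simp
  have sX: "(\<lambda>c. (X c)\<^sup>2) summable_on UNIV" using xi unfolding X_def Wsp_def by simp
  have sY: "(\<lambda>c. (Y c)\<^sup>2) summable_on UNIV" using eta unfolding Y_def Wsp_def by simp
  have X0: "0 \<le> X c" for c unfolding X_def by simp
  have Y0: "0 \<le> Y c" for c unfolding Y_def by simp
  have Gle: "norm (G (x, b)) \<le> A b * (X (x - b) * Y x)" for x b
  proof -
    have "norm (G (x, b)) \<le> norm (T x b) * norm (eta x)"
      unfolding G_def by (simp add: norm_cmat_inner)
    also have "\<dots> \<le> (norm (a b) * norm (xi (x - b))) * norm (eta x)"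
      unfolding T_def by (intro mult_right_mono term_norm_le) simp
    also have "\<dots> \<le> (wt b powr \<bar>s\<bar> * wt (x - b) powr s * wt x powr (- s)) * ((norm (a b) * norm (xi (x - b))) * norm (eta x))"
    proof -
      have "wt x powr s * wt x powr (- s) \<le> (wt b powr \<bar>s\<bar> * wt (x - b) powr s) * wt x powr (- s)"
        by (intro mult_right_mono wt_powr_shift) simp
      then have "1 \<le> wt b powr \<bar>s\<bar> * wt (x - b) powr s * wt x powr (- s)"
        by (simp add: wt_powr_cancel)
      from mult_right_mono[OF this, of "(norm (a b) * norm (xi (x - b))) * norm (eta x)"]
      show ?thesis by simp
    qed
    also have "\<dots> = A b * (X (x - b) * Y x)" unfolding A_def X_def Y_def by (simp add: algebra_simps)
    finally show ?thesis .
  qed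
  define K where "K = (1 / 2) * (infsum (\<lambda>c. (X c)\<^sup>2) UNIV + infsum (\<lambda>c. (Y c)\<^sup>2) UNIV)"
  have inner_s: "((\<lambda>x. (1 / 2) * ((X (x - b))\<^sup>2 + (Y x)\<^sup>2)) has_sum K) UNIV" for b
  proof -
    have "((\<lambda>x. (X (x - b))\<^sup>2) has_sum infsum (\<lambda>c. (X c)\<^sup>2) UNIV) UNIV"
      using has_sum_shift[of "\<lambda>c. (X c)\<^sup>2" b] sX by simp
    moreover have "((\<lambda>x. (Y x)\<^sup>2) has_sum infsum (\<lambda>c. (Y c)\<^sup>2) UNIV) UNIV"
      using sY by simp
    ultimately show ?thesis unfolding K_def by (intro has_sum_cmult_right has_sum_add)
  qed
  have XYle: "X (x - b) * Y x \<le> (1 / 2) * ((X (x - b))\<^sup>2 + (Y x)\<^sup>2)" for x b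
    using sum_squares_ge_zero[of "X (x - b) - Y x" 0] by (simp add: power2_diff power2_eq_square field_simps)
  have sXY: "(\<lambda>x. X (x - b) * Y x) summable_on UNIV" for b
    by (rule summable_on_comparison_test[OF has_sum_imp_summable[OF inner_s] XYle])
       (simp add: X0 Y0)
  have XYK: "infsum (\<lambda>x. X (x - b) * Y x) UNIV \<le> K" for b
  proof -
    have "infsum (\<lambda>x. X (x - b) * Y x) UNIV \<le> infsum (\<lambda>x. (1 / 2) * ((X (x - b))\<^sup>2 + (Y x)\<^sup>2)) UNIV"
      by (rule infsum_mono[OF sXY has_sum_imp_summable[OF inner_s] XYle])
    also have "\<dots> = K" by (rule infsumI[OF inner_s])
    finally show ?thesis .
  qed
  have sM: "(\<lambda>p. A (fst p) * (X (snd p - fst p) * Y (snd p))) summable_on Sigma UNIV (\<lambda>_. UNIV)"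
  proof (rule summable_on_SigmaI[where g="\<lambda>b. A b * infsum (\<lambda>x. X (x - b) * Y x) UNIV"])
    show "((\<lambda>y. A (fst (b, y)) * (X (snd (b, y) - fst (b, y)) * Y (snd (b, y)))) has_sum
          A b * infsum (\<lambda>x. X (x - b) * Y x) UNIV) UNIV" for b
      by simp (rule has_sum_cmult_right, rule has_sum_infsum, rule sXY)
    show "(\<lambda>b. A b * infsum (\<lambda>x. X (x - b) * Y x) UNIV) summable_on UNIV"
    proof (rule summable_on_comparison_test[OF summable_on_cmult_left[OF sA, of K]])
      fix b
      show "A b * infsum (\<lambda>x. X (x - b) * Y x) UNIV \<le> A b * K"
        by (intro mult_left_mono XYK A0)
      show "0 \<le> A b * infsum (\<lambda>x. X (x - b) * Y x) UNIV"
        by (intro mult_nonneg_nonneg A0 infsum_nonneg) (simp_all add: X0 Y0)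
    qed
    show "0 \<le> A (fst (b, y)) * (X (snd (b, y) - fst (b, y)) * Y (snd (b, y)))" for b y
      by (simp add: A0 X0 Y0)
  qed
  have sM': "(\<lambda>p. A (snd p) * (X (fst p - snd p) * Y (fst p))) summable_on (UNIV \<times> UNIV)"
    using sM by (subst summable_on_swap) (simp add: case_prod_unfold)
  have sG: "G summable_on (UNIV \<times> UNIV)"
  proof (rule abs_summable_summable)
    show "(\<lambda>p. norm (G p)) summable_on (UNIV \<times> UNIV)"
      by (rule summable_on_comparison_test[OF sM']) (auto simp: Gle[of "fst p" "snd p" for p, simplified])
  qed
  have step2: "infsum (\<lambda>x. infsum (\<lambda>b. G (x, b)) UNIV) UNIV = infsum G (UNIV \<times> UNIV)"
    by (rule infsum_Sigma_banach[OF sG])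
  define j where "j p = (fst p - snd p, - snd p)" for p :: "(int, 'N) vec \<times> (int, 'N) vec"
  have jj: "j (j p) = p" for p unfolding j_def by simp
  have step3: "infsum (\<lambda>p. G (j p)) (UNIV \<times> UNIV) = infsum G (UNIV \<times> UNIV)"
    by (rule infsum_reindex_bij_witness[where i=j and j=j]) (auto simp: jj)
  have sGj: "(\<lambda>p. G (j p)) summable_on (UNIV \<times> UNIV)"
    using sG by (subst summable_on_reindex_bij_witness[where i=j and j=j and h=G]) (auto simp: jj)
  have step4: "G (j p) = H p" for p
  proof -
    obtain y b where p: "p = (y, b)" by (cases p)
    have "G (j p) = cmat_inner (cmat_scale (twist \<theta> (- b) y) (a (- b) ** xi y)) (eta (y - b))"
      unfolding G_def T_def j_def p by simp
    also have "\<dots> = cnj (twist \<theta> (- b) y) * cmat_inner (xi y) (cmat_adj (a (- b)) ** eta (y - b))"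
      by (simp add: cmat_inner_scale_left cmat_inner_mult_left)
    also have "\<dots> = cnj (twist \<theta> (- b) y) * (- (twist \<theta> b (- b) * cmat_inner (xi y) (a b ** eta (y - b))))"
      by (simp add: skew_adj[OF sk] mat_mult_uminus_left cmat_scale_mult_left cmat_inner_minus_right cmat_inner_scale_right)
    also have "\<dots> = - ((cnj (twist \<theta> (- b) y) * twist \<theta> b (- b)) * cmat_inner (xi y) (a b ** eta (y - b)))"
      by (simp add: algebra_simps)
    also have "\<dots> = - (twist \<theta> b (y - b) * cmat_inner (xi y) (a b ** eta (y - b)))"
      by (simp add: twist_identity)
    also have "\<dots> = H p"
      unfolding H_def U_def p by (simp add: cmat_inner_scale_right)
    finally show ?thesis .
  qed
  have sH: "H summable_on (UNIV \<times> UNIV)" using sGj by (simp add: step4)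
  have step5: "infsum H (UNIV \<times> UNIV) = infsum (\<lambda>y. infsum (\<lambda>b. H (y, b)) UNIV) UNIV"
    by (rule infsum_Sigma_banach[OF sH, symmetric])
  have step6: "infsum (\<lambda>b. H (y, b)) UNIV = - cmat_inner (xi y) (piop \<theta> a eta y)" for y
  proof -
    have "piop \<theta> a eta y = infsum (U y) UNIV" unfolding piop_def U_def by simp
    then show ?thesis unfolding H_def
      by (simp add: infsum_uminus inner_infsum_right[OF sU])
  qed
  have "hinner (piop \<theta> a xi) eta = infsum H (UNIV \<times> UNIV)"
    using step1 step2 step3 step4 by simp
  also have "\<dots> = infsum (\<lambda>y. - cmat_inner (xi y) (piop \<theta> a eta y)) UNIV"
    using step5 step6 by simp
  also have "\<dots> = - hinner xi (piop \<theta> a eta)"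
    unfolding hinner_def by (rule infsum_uminus)
  finally show ?thesis .
qed



context
  fixes \<theta> :: "((real, 'N::idx) vec, 'N) vec"
    and h :: "'N \<Rightarrow> (int, 'N) vec \<Rightarrow> complex ^ 'n::finite ^ 'n"
  assumes rh: "\<And>k. rapid (h k)"
    and skh: "\<And>k. nc_star \<theta> (h k) = (\<lambda>\<alpha>. - h k \<alpha>)"
begin

lemma nabla_Wsp:
  assumes "phi \<in> Wsp (s + 1)"
  shows "nabla \<theta> h k phi \<in> Wsp s"
  unfolding nabla_def
proof (rule Wsp_add)
  show "Dop k phi \<in> Wsp s" by (rule Dop_Wsp[OF assms])
  show "piop \<theta> (h k) phi \<in> Wsp s"
    by (rule Wsp_mono[of s "s + 1"]) (auto intro: conv_Wsp[OF rh assms])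
qed

lemma nabla_skew:
  assumes phi: "phi \<in> Wsp (s + 1)" and psi: "psi \<in> Wsp (- s)"
  shows "hinner (nabla \<theta> h k phi) psi = - hinner phi (nabla \<theta> h k psi)"
proof -
  have phi0: "phi \<in> Wsp s" by (rule Wsp_mono[OF _ phi]) simp
  have psi1: "psi \<in> Wsp (- (s + 1))" by (rule Wsp_mono[OF _ psi]) simp
  have psi2: "psi \<in> Wsp (- (s + 1) + 1)" using psi by simp
  have Pphi: "piop \<theta> (h k) phi \<in> Wsp s"
    by (rule Wsp_mono[OF _ conv_Wsp[OF rh phi]]) simp
  have Ppsi: "piop \<theta> (h k) psi \<in> Wsp (- (s + 1))"
    by (rule Wsp_mono[OF _ conv_Wsp[OF rh psi]]) simp
  have "hinner (nabla \<theta> h k phi) psi = hinner (Dop k phi) psi + hinner (piop \<theta> (h k) phi) psi"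
    unfolding nabla_def by (rule hinner_add_left[OF Dop_Wsp[OF phi] Pphi psi])
  also have "\<dots> = - hinner phi (Dop k psi) - hinner phi (piop \<theta> (h k) psi)"
    using Dop_skew P_skew[OF rh skh phi psi1] by simp
  also have "\<dots> = - hinner phi (nabla \<theta> h k psi)"
    unfolding nabla_def using hinner_add_right[OF phi Dop_Wsp[OF psi2] Ppsi] by simp
  finally show ?thesis .
qed

lemma Hop_Wsp:
  assumes "xi \<in> Wsp (s + 2)"
  shows "Hop \<theta> h xi \<in> Wsp s"
proof -
  have "nabla \<theta> h k xi \<in> Wsp (s + 1)" for k
    by (rule nabla_Wsp) (use assms in \<open>simp add: add.assoc\<close>)
  then have "nabla \<theta> h k (nabla \<theta> h k xi) \<in> Wsp s" for k
    by (rule nabla_Wsp)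
  then show ?thesis unfolding Hop_def
    by (intro Wsp_uminus Wsp_sum)
qed

lemma Hop_sym:
  assumes xi: "xi \<in> Wsp 2" and eta: "eta \<in> Wsp 0"
  shows "hinner (Hop \<theta> h xi) eta = hinner xi (Hop \<theta> h eta)"
proof -
  have eta': "eta \<in> Wsp (- 0)" using eta by simp
  have xi1: "xi \<in> Wsp (1 + 1)" using xi by simp
  have Nxi: "nabla \<theta> h k xi \<in> Wsp (0 + 1)" for k
    by (rule nabla_Wsp) (use xi in simp)
  have NNxi: "nabla \<theta> h k (nabla \<theta> h k xi) \<in> Wsp 0" for k
    by (rule nabla_Wsp[OF Nxi])
  have Neta: "nabla \<theta> h k eta \<in> Wsp (- 1)" for k
    by (rule nabla_Wsp) (use eta in simp)
  have NNeta: "nabla \<theta> h k (nabla \<theta> h k eta) \<in> Wsp (- 2)" for k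
    by (rule nabla_Wsp) (use Neta in simp)
  have each: "hinner (nabla \<theta> h k (nabla \<theta> h k xi)) eta = hinner xi (nabla \<theta> h k (nabla \<theta> h k eta))" for k
  proof -
    have "hinner (nabla \<theta> h k (nabla \<theta> h k xi)) eta = - hinner (nabla \<theta> h k xi) (nabla \<theta> h k eta)"
      by (rule nabla_skew[OF Nxi eta'])
    also have "hinner (nabla \<theta> h k xi) (nabla \<theta> h k eta) = - hinner xi (nabla \<theta> h k (nabla \<theta> h k eta))"
      by (rule nabla_skew[OF xi1]) (use Neta in simp)
    finally show ?thesis by simp
  qed
  have "hinner (Hop \<theta> h xi) eta = - hinner (\<lambda>\<alpha>. \<Sum>k\<in>UNIV. nabla \<theta> h k (nabla \<theta> h k xi) \<alpha>) eta"
    unfolding Hop_def by (rule hinner_uminus_left)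
  also have "\<dots> = - (\<Sum>k\<in>UNIV. hinner (nabla \<theta> h k (nabla \<theta> h k xi)) eta)"
    by (subst hinner_sum_left[where s=0]) (use NNxi eta' in auto)
  also have "\<dots> = - (\<Sum>k\<in>UNIV. hinner xi (nabla \<theta> h k (nabla \<theta> h k eta)))"
    by (simp add: each)
  also have "\<dots> = - hinner xi (\<lambda>\<alpha>. \<Sum>k\<in>UNIV. nabla \<theta> h k (nabla \<theta> h k eta) \<alpha>)"
    by (subst hinner_sum_right[where s=2]) (use NNeta xi in auto)
  also have "\<dots> = hinner xi (Hop \<theta> h eta)"
    unfolding Hop_def by (simp add: hinner_uminus_right)
  finally show ?thesis .
qed

definition Lap :: "('N, 'n) coeff \<Rightarrow> ('N, 'n) coeff" where
  "Lap xi = (\<lambda>\<alpha>. cmat_scale (complex_of_real (msq \<alpha>)) (xi \<alpha>))"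

lemma cmat_scale_sum_left: "cmat_scale (\<Sum>k\<in>S. c k) A = (\<Sum>k\<in>S. cmat_scale (c k) A)"
  by (simp add: cmat_scale_def vec_eq_iff sum_distrib_right)

lemma Hop_decomp:
  "Lap xi \<alpha> = Hop \<theta> h xi \<alpha> + (\<Sum>k\<in>UNIV. Dop k (piop \<theta> (h k) xi) \<alpha> + piop \<theta> (h k) (nabla \<theta> h k xi) \<alpha>)"
proof -
  have DD: "Dop k (Dop k xi) \<alpha> = - cmat_scale (complex_of_real ((real_of_int (\<alpha> $ k))\<^sup>2)) (xi \<alpha>)" for k
    unfolding Dop_def cmat_scale_scale
    by (simp add: cmat_scale_minus[symmetric] power2_eq_square algebra_simps)
  have NN: "nabla \<theta> h k (nabla \<theta> h k xi) \<alpha> = Dop k (Dop k xi) \<alpha> + (Dop k (piop \<theta> (h k) xi) \<alpha> + piop \<theta> (h k) (nabla \<theta> h k xi) \<alpha>)" for k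
  proof -
    have "Dop k (nabla \<theta> h k xi) \<alpha> = Dop k (Dop k xi) \<alpha> + Dop k (piop \<theta> (h k) xi) \<alpha>"
      unfolding nabla_def by (simp add: Dop_def cmat_scale_add)
    then show ?thesis unfolding nabla_def[of \<theta> h k "nabla \<theta> h k xi"] by (simp add: add.assoc)
  qed
  have "Lap xi \<alpha> = (\<Sum>k\<in>UNIV. cmat_scale (complex_of_real ((real_of_int (\<alpha> $ k))\<^sup>2)) (xi \<alpha>))"
    unfolding Lap_def msq_def by (simp add: cmat_scale_sum_left[symmetric])
  also have "\<dots> = - (\<Sum>k\<in>UNIV. Dop k (Dop k xi) \<alpha>)"
    by (simp add: DD sum_negf)
  also have "\<dots> = Hop \<theta> h xi \<alpha> + (\<Sum>k\<in>UNIV. Dop k (piop \<theta> (h k) xi) \<alpha> + piop \<theta> (h k) (nabla \<theta> h k xi) \<alpha>)"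
    unfolding Hop_def by (simp add: NN sum.distrib)
  finally show ?thesis .
qed

lemma Lap_gain:
  assumes "xi \<in> Wsp t" "Lap xi \<in> Wsp t"
  shows "xi \<in> Wsp (t + 2)"
proof (rule Wsp_compare[OF Wsp_add[OF assms], where C="2 * (real CARD('N) + 1)"])
  fix \<alpha> :: "(int, 'N) vec"
  let ?K = "2 * (real CARD('N) + 1)"
  have e: "xi \<alpha> + Lap xi \<alpha> = cmat_scale (1 + complex_of_real (msq \<alpha>)) (xi \<alpha>)"
    unfolding Lap_def by (simp add: cmat_scale_add_left)
  have n: "norm (xi \<alpha> + Lap xi \<alpha>) = (1 + msq \<alpha>) * norm (xi \<alpha>)"
  proof -
    have "cmod (1 + complex_of_real (msq \<alpha>)) = 1 + msq \<alpha>"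
      using msq_nonneg[of \<alpha>] by (metis abs_of_nonneg add_nonneg_nonneg norm_of_real of_real_1 of_real_add zero_le_one)
    then show ?thesis unfolding e norm_cmat_scale by simp
  qed
  have "wt \<alpha> powr (t + 2) * norm (xi \<alpha>) = wt \<alpha> powr t * ((wt \<alpha>)\<^sup>2 * norm (xi \<alpha>))"
    using wt_pos[of \<alpha>] by (simp add: powr_add power2_eq_square)
  also have "\<dots> \<le> wt \<alpha> powr t * ((?K * (1 + msq \<alpha>)) * norm (xi \<alpha>))"
    by (intro mult_left_mono mult_right_mono wt_sq_le) auto
  also have "\<dots> = ?K * (wt \<alpha> powr t * norm (xi \<alpha> + Lap xi \<alpha>))"
    unfolding n by (simp add: algebra_simps)
  finally show "wt \<alpha> powr (t + 2) * norm (xi \<alpha>) \<le> ?K * (wt \<alpha> powr t * norm (xi \<alpha> + Lap xi \<alpha>))" .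
qed

lemma regularity:
  assumes eta: "eta \<in> Wsp r" and H: "Hop \<theta> h eta \<in> Wsp (r - 1)"
  shows "eta \<in> Wsp (r + 1)"
proof -
  have eta': "eta \<in> Wsp ((r - 1) + 1)" using eta by simp
  have 1: "Dop k (piop \<theta> (h k) eta) \<in> Wsp (r - 1)" for k
    by (rule Dop_Wsp) (use conv_Wsp[OF rh eta] in simp)
  have 2: "piop \<theta> (h k) (nabla \<theta> h k eta) \<in> Wsp (r - 1)" for k
    by (rule conv_Wsp[OF rh nabla_Wsp[OF eta']])
  have "(\<lambda>\<alpha>. Hop \<theta> h eta \<alpha> + (\<Sum>k\<in>UNIV. Dop k (piop \<theta> (h k) eta) \<alpha> + piop \<theta> (h k) (nabla \<theta> h k eta) \<alpha>)) \<in> Wsp (r - 1)"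
    by (intro Wsp_add H Wsp_sum 1 2)
  then have L: "Lap eta \<in> Wsp (r - 1)"
    by (simp add: Hop_decomp[symmetric] fun_eq_iff)
  have "eta \<in> Wsp (r - 1)" by (rule Wsp_mono[OF _ eta]) simp
  from Lap_gain[OF this L] show ?thesis by (simp add: add.commute)
qed

lemma dom_Delta_Wsp: "dom_Delta = (Wsp 2 :: ('N, 'n) coeff set)"
proof
  show "dom_Delta \<subseteq> (Wsp 2 :: ('N, 'n) coeff set)"
  proof
    fix xi :: "('N, 'n) coeff" assume "xi \<in> dom_Delta"
    then have "xi \<in> Wsp 0" "Lap xi \<in> Wsp 0"
      unfolding dom_Delta_def Wsp_0 Lap_def by auto
    from Lap_gain[OF this] show "xi \<in> Wsp 2" by simp
  qed
  show "(Wsp 2 :: ('N, 'n) coeff set) \<subseteq> dom_Delta"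
  proof
    fix xi :: "('N, 'n) coeff" assume xi: "xi \<in> Wsp 2"
    have "xi \<in> Wsp 0" by (rule Wsp_mono[OF _ xi]) simp
    moreover have "Lap xi \<in> Wsp 0"
    proof (rule Wsp_compare[OF xi, where C=1])
      fix \<alpha> :: "(int, 'N) vec"
      have "norm (Lap xi \<alpha>) = msq \<alpha> * norm (xi \<alpha>)"
        unfolding Lap_def norm_cmat_scale using msq_nonneg[of \<alpha>] by simp
      also have "\<dots> \<le> (wt \<alpha>)\<^sup>2 * norm (xi \<alpha>)" by (intro mult_right_mono msq_le_wt) simp
      also have "(wt \<alpha>)\<^sup>2 = wt \<alpha> powr 2" using wt_pos[of \<alpha>] by (simp add: powr_realpow)
      finally show "wt \<alpha> powr 0 * norm (Lap xi \<alpha>) \<le> 1 * (wt \<alpha> powr 2 * norm (xi \<alpha>))" by simp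
    qed
    ultimately show "xi \<in> dom_Delta" unfolding dom_Delta_def Wsp_0 Lap_def by auto
  qed
qed

end



lemma density:
  fixes xi :: "('N::finite, 'n::finite) coeff"
  assumes xi: "xi \<in> L2" and e: "e > 0"
  shows "\<exists>psi\<in>Wsp 2. (\<Sum>\<^sub>\<infinity>\<alpha>. (norm (xi \<alpha> - psi \<alpha>))\<^sup>2) < e"
proof -
  define f where "f \<alpha> = (norm (xi \<alpha>))\<^sup>2" for \<alpha>
  have sf: "f summable_on UNIV" using xi unfolding L2_def f_def by simp
  define S where "S = infsum f UNIV"
  have "(sum f \<longlongrightarrow> S) (finite_subsets_at_top UNIV)"
    using has_sum_infsum[OF sf] unfolding S_def has_sum_def .
  then have "eventually (\<lambda>F. dist (sum f F) S < e) (finite_subsets_at_top UNIV)"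
    using e by (rule tendstoD)
  then obtain F where F: "finite F" "dist (sum f F) S < e"
    unfolding eventually_finite_subsets_at_top by blast
  define psi where "psi \<alpha> = (if \<alpha> \<in> F then xi \<alpha> else 0)" for \<alpha>
  have psiW: "psi \<in> Wsp 2"
    by (rule Wsp_finite_support[OF F(1)]) (simp add: psi_def)
  define g where "g \<alpha> = (if \<alpha> \<in> F then 0 else f \<alpha>)" for \<alpha>
  define k where "k \<alpha> = (if \<alpha> \<in> F then f \<alpha> else 0)" for \<alpha>
  have gk: "f \<alpha> = g \<alpha> + k \<alpha>" for \<alpha> unfolding g_def k_def by simp
  have sk: "k summable_on UNIV"
  proof -
    have "k summable_on F" using F(1) by simp
    moreover have "(k summable_on F) = (k summable_on UNIV)"
      by (rule summable_on_cong_neutral) (auto simp: k_def)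
    ultimately show ?thesis by simp
  qed
  have ik: "infsum k UNIV = sum f F"
  proof -
    have "infsum k UNIV = infsum k F"
      by (rule infsum_cong_neutral) (auto simp: k_def)
    also have "\<dots> = sum k F" using F(1) by simp
    also have "\<dots> = sum f F" by (rule sum.cong) (auto simp: k_def)
    finally show ?thesis .
  qed
  have sg: "g summable_on UNIV"
    by (rule summable_on_comparison_test[OF sf]) (auto simp: g_def f_def)
  have "S = infsum g UNIV + infsum k UNIV"
    unfolding S_def gk by (rule infsum_add[OF sg sk])
  then have ig: "infsum g UNIV = S - sum f F" using ik by simp
  have "sum f F \<le> S"
    unfolding S_def by (rule finite_sum_le_infsum[OF sf F(1)]) (auto simp: f_def)
  then have "infsum g UNIV < e" using F(2) ig by (simp add: dist_real_def)
  moreover have "(\<Sum>\<^sub>\<infinity>\<alpha>. (norm (xi \<alpha> - psi \<alpha>))\<^sup>2) = infsum g UNIV"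
    by (rule infsum_cong) (simp add: g_def psi_def f_def)
  ultimately show ?thesis using psiW by (intro bexI[where x=psi]) auto
qed

definition unitm :: "'n::finite \<Rightarrow> 'n \<Rightarrow> complex ^ 'n ^ 'n" where
  "unitm i j = (\<chi> a b. if a = i \<and> b = j then 1 else 0)"

lemma cmat_inner_unitm: "cmat_inner (unitm i j) B = B $ i $ j"
proof -
  have e: "cnj (unitm i j $ a $ b) * B $ a $ b = (if a = i then (if b = j then B $ a $ b else 0) else 0)" for a b
    by (simp add: unitm_def)
  have "cmat_inner (unitm i j) B = (\<Sum>a\<in>UNIV. \<Sum>b\<in>UNIV. if a = i then (if b = j then B $ a $ b else 0) else 0)"
    unfolding cmat_inner_def e ..
  also have "\<dots> = (\<Sum>a\<in>UNIV. if a = i then (\<Sum>b\<in>UNIV. if b = j then B $ a $ b else 0) else 0)"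
    by (intro sum.cong refl) auto
  also have "\<dots> = B $ i $ j" by simp
  finally show ?thesis .
qed

lemma hinner_delta:
  fixes phi :: "('N::finite, 'n::finite) coeff"
  shows "hinner (\<lambda>\<alpha>. if \<alpha> = \<alpha>0 then unitm i j else 0) phi = phi \<alpha>0 $ i $ j"
proof -
  have "hinner (\<lambda>\<alpha>. if \<alpha> = \<alpha>0 then unitm i j else 0) phi
      = infsum (\<lambda>\<alpha>. cmat_inner (if \<alpha> = \<alpha>0 then unitm i j else 0) (phi \<alpha>)) {\<alpha>0}"
    unfolding hinner_def by (rule infsum_cong_neutral) (auto simp: cmat_inner_def)
  also have "\<dots> = phi \<alpha>0 $ i $ j" by (simp add: cmat_inner_unitm)
  finally show ?thesis .
qed

theorem mainTheorem7:
  fixes \<theta> :: "((real, 'N::idx) vec, 'N) vec"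
    and h :: "'N \<Rightarrow> (int, 'N) vec \<Rightarrow> complex ^ 'n::finite ^ 'n"
  assumes antisym: "\<forall>k l. \<theta> $ l $ k = - \<theta> $ k $ l"
    and smooth: "\<forall>k. smooth_elt (h k)"
    and skew: "\<forall>k. nc_star \<theta> (h k) = (\<lambda>\<alpha>. - h k \<alpha>)"
  shows "self_adjoint_op (Hop \<theta> h) dom_Delta"
proof -
  have rh: "\<And>k. rapid (h k)" using smooth smooth_rapid by blast
  have skh: "\<And>k. nc_star \<theta> (h k) = (\<lambda>\<alpha>. - h k \<alpha>)" using skew by blast
  have D: "dom_Delta = (Wsp 2 :: ('N, 'n) coeff set)" by (rule dom_Delta_Wsp[OF rh skh])
  have HW: "Hop \<theta> h xi \<in> Wsp 0" if "xi \<in> Wsp 2" for xi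
    by (rule Hop_Wsp[OF rh skh]) (use that in simp)
  have sym: "hinner (Hop \<theta> h xi) eta = hinner xi (Hop \<theta> h eta)" if "xi \<in> Wsp 2" "eta \<in> Wsp 0" for xi eta
    by (rule Hop_sym[OF rh skh that])
  show ?thesis unfolding self_adjoint_op_def
  proof (intro conjI ballI allI impI iffI)
    show "dom_Delta \<subseteq> L2" unfolding dom_Delta_def by auto
    show "Hop \<theta> h ` dom_Delta \<subseteq> L2" using HW by (auto simp: D Wsp_0[symmetric])
  next
    fix xi :: "('N, 'n) coeff" and e :: real
    assume "xi \<in> L2" "0 < e"
    then show "\<exists>psi\<in>dom_Delta. (\<Sum>\<^sub>\<infinity>\<alpha>. (norm (xi \<alpha> - psi \<alpha>))\<^sup>2) < e"
      unfolding D by (rule density)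
  next
    fix eta :: "('N, 'n) coeff"
    assume eta: "eta \<in> L2" and etaD: "eta \<in> dom_Delta"
    show "\<exists>zeta\<in>L2. \<forall>xi\<in>dom_Delta. hinner (Hop \<theta> h xi) eta = hinner xi zeta"
    proof (intro bexI[where x="Hop \<theta> h eta"] ballI)
      show "Hop \<theta> h eta \<in> L2" using HW etaD by (simp add: D Wsp_0[symmetric])
      fix xi :: "('N, 'n) coeff" assume "xi \<in> dom_Delta"
      then show "hinner (Hop \<theta> h xi) eta = hinner xi (Hop \<theta> h eta)"
        using eta by (intro sym) (auto simp: D Wsp_0)
    qed
  next
    fix eta :: "('N, 'n) coeff"
    assume eta: "eta \<in> L2" and ex: "\<exists>zeta\<in>L2. \<forall>xi\<in>dom_Delta. hinner (Hop \<theta> h xi) eta = hinner xi zeta"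
    then obtain zeta where zeta: "zeta \<in> L2" and Z: "\<And>xi. xi \<in> Wsp 2 \<Longrightarrow> hinner (Hop \<theta> h xi) eta = hinner xi zeta"
      unfolding D by blast
    have eta0: "eta \<in> Wsp 0" using eta by (simp add: Wsp_0)
    have "Hop \<theta> h eta \<alpha>0 $ i $ j = zeta \<alpha>0 $ i $ j" for \<alpha>0 i j
    proof -
      define d :: "('N, 'n) coeff" where "d \<alpha> = (if \<alpha> = \<alpha>0 then unitm i j else 0)" for \<alpha>
      have dW: "d \<in> Wsp 2" by (rule Wsp_finite_support[of "{\<alpha>0}"]) (auto simp: d_def)
      have "Hop \<theta> h eta \<alpha>0 $ i $ j = hinner d (Hop \<theta> h eta)" unfolding d_def by (rule hinner_delta[symmetric])
      also have "\<dots> = hinner (Hop \<theta> h d) eta" by (rule sym[OF dW eta0, symmetric])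
      also have "\<dots> = hinner d zeta" by (rule Z[OF dW])
      also have "\<dots> = zeta \<alpha>0 $ i $ j" unfolding d_def by (rule hinner_delta)
      finally show ?thesis .
    qed
    then have HZ: "Hop \<theta> h eta = zeta" by (simp add: fun_eq_iff vec_eq_iff)
    have H0: "Hop \<theta> h eta \<in> Wsp 0" using zeta HZ by (simp add: Wsp_0)
    have "eta \<in> Wsp (0 + 1)"
      by (rule regularity[OF rh skh eta0]) (rule Wsp_mono[OF _ H0], simp)
    then have eta1: "eta \<in> Wsp 1" by simp
    have "eta \<in> Wsp (1 + 1)"
      by (rule regularity[OF rh skh eta1]) (use H0 in simp)
    then show "eta \<in> dom_Delta" by (simp add: D)
  next
    fix xi eta :: "('N, 'n) coeff"
    assume "xi \<in> dom_Delta" "eta \<in> dom_Delta"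
    then show "hinner (Hop \<theta> h xi) eta = hinner xi (Hop \<theta> h eta)"
      by (intro sym) (auto simp: D intro: Wsp_mono[of 0 2])
  qed
qed


end
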